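(* Let $u^{\mathrm{in}}\in L^1(\mathbb{R}_+)\cap L^\infty(\mathbb{R}_+)$ with $u^{\mathrm{in}}\ge 0$ a.e. and $\int_{\mathbb{R}_+}x\,u^{\mathrm{in}}(x)\,\mathrm{d}x<+\infty$. Let $u$ be a (strong) solution of $$\partial_t u(t,x)=\Big(\int_{\mathbb{R}_+}u(t,z)\,\mathrm{d}z\Big)\partial_x^2u(t,x),\qquad u(t,0)=0,\qquad u(0,x)=u^{\mathrm{in}}(x).$$ Then the first spatial moment is conserved: for all $t\in\mathbb{R}_+$, $\int_{\mathbb{R}_+}x\,u(t,x)\,\mathrm{d}x=\int_{\mathbb{R}_+}x\,u^{\mathrm{in}}(x)\,\mathrm{d}x$.
   Context: $\mathbb{R}_+=[0,+\infty)$; the equation holds for $t>0$, $x>0$. *)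

theory Defs
  imports "HOL-Analysis.Analysis"
begin

text \<open>Functions of time and space are curried: u t x. The half-line R_+ is {0..}.\<close>

definition mass :: "(real \<Rightarrow> real) \<Rightarrow> real" where
  "mass f = (LINT z:{0..}|lborel. f z)"

definition strong_solution ::
  "(real \<Rightarrow> real) \<Rightarrow> (real \<Rightarrow> real \<Rightarrow> real) \<Rightarrow> bool" where
  "strong_solution uin u \<longleftrightarrow>
     (\<forall>x\<ge>0. u 0 x = uin x) \<and>
     (\<forall>t\<ge>0. set_integrable lborel {0..} (u t)) \<and>
     (\<forall>t\<ge>0. ((\<lambda>s. LINT x:{0..}|lborel. \<bar>u s x - u t x\<bar>) \<longlongrightarrow> 0) (at t within {0..})) \<and>
     (\<forall>T\<ge>0. \<exists>C. \<forall>t\<in>{0..T}. \<forall>x\<ge>0. \<bar>u t x\<bar> \<le> C) \<and>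
     (\<exists>ut ux uxx.
        (\<forall>t>0. \<forall>x\<ge>0.
           ((\<lambda>s. u s x) has_real_derivative ut t x) (at t) \<and>
           ((\<lambda>y. u t y) has_real_derivative ux t x) (at x within {0..}) \<and>
           ((\<lambda>y. ux t y) has_real_derivative uxx t x) (at x within {0..})) \<and>
        continuous_on ({0<..} \<times> {0..}) (\<lambda>(t, x). u t x) \<and>
        continuous_on ({0<..} \<times> {0..}) (\<lambda>(t, x). ut t x) \<and>
        continuous_on ({0<..} \<times> {0..}) (\<lambda>(t, x). ux t x) \<and>
        continuous_on ({0<..} \<times> {0..}) (\<lambda>(t, x). uxx t x) \<and>
        (\<forall>t>0. u t 0 = 0) \<and>
        (\<forall>t>0. \<forall>x>0. ut t x = mass (u t) * uxx t x))"

end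

theory Submission
  imports Defs "HOL-Probability.Levy"
begin

locale sol =
  fixes u ut ux uxx :: "real \<Rightarrow> real \<Rightarrow> real"
  assumes dt: "\<And>t x. t > 0 \<Longrightarrow> x \<ge> 0 \<Longrightarrow> ((\<lambda>s. u s x) has_real_derivative ut t x) (at t)"
    and dx: "\<And>t x. t > 0 \<Longrightarrow> x \<ge> 0 \<Longrightarrow> ((\<lambda>y. u t y) has_real_derivative ux t x) (at x within {0..})"
    and dxx: "\<And>t x. t > 0 \<Longrightarrow> x \<ge> 0 \<Longrightarrow> ((\<lambda>y. ux t y) has_real_derivative uxx t x) (at x within {0..})"
    and cu: "continuous_on ({0<..} \<times> {0..}) (\<lambda>(t, x). u t x)"
    and cut: "continuous_on ({0<..} \<times> {0..}) (\<lambda>(t, x). ut t x)"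
    and cux: "continuous_on ({0<..} \<times> {0..}) (\<lambda>(t, x). ux t x)"
    and cuxx: "continuous_on ({0<..} \<times> {0..}) (\<lambda>(t, x). uxx t x)"
    and bc: "\<And>t. t > 0 \<Longrightarrow> u t 0 = 0"
    and eqn: "\<And>t x. t > 0 \<Longrightarrow> x > 0 \<Longrightarrow> ut t x = mass (u t) * uxx t x"
begin

lemma cont2: 
  fixes f :: "real \<Rightarrow> real \<Rightarrow> real"
  assumes c: "continuous_on ({0<..} \<times> {0..}) (\<lambda>(t, x). f t x)" and "0 < a"
  shows "continuous_on ({a..b} \<times> {0..L}) (\<lambda>p. f (fst p) (snd p))"
proof -
  have "continuous_on ({0<..} \<times> {0..}) (\<lambda>p. f (fst p) (snd p))"
    using c by (simp add: case_prod_beta)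
  then show ?thesis by (rule continuous_on_subset) (use \<open>0<a\<close> in auto)
qed

lemma cont1: 
  fixes f :: "real \<Rightarrow> real \<Rightarrow> real"
  assumes c: "continuous_on ({0<..} \<times> {0..}) (\<lambda>(t, x). f t x)" and "0 < s"
  shows "continuous_on {0..L} (f s)"
proof -
  have "continuous_on ({s..s} \<times> {0..L}) (\<lambda>p. f (fst p) (snd p))"
    by (rule cont2[OF c \<open>0<s\<close>])
  then have "continuous_on {0..L} (\<lambda>x. (\<lambda>p. f (fst p) (snd p)) (s, x))"
    by (rule continuous_on_compose2) (auto intro!: continuous_intros)
  then show ?thesis by simp
qed

lemma weak:
  fixes H H' H'' phi phi' phi'' :: "real \<Rightarrow> real"
  assumes ab: "0 < a" "a \<le> b" and L: "0 < L"
   and HD: "\<And>v. (H has_real_derivative H' v) (at v)"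
   and HD': "\<And>v. (H' has_real_derivative H'' v) (at v)"
   and Hc: "continuous_on UNIV H''"
   and H0: "H 0 = 0"
   and pD: "\<And>x. x \<in> {0..L} \<Longrightarrow> (phi has_real_derivative phi' x) (at x within {0..L})"
   and pD': "\<And>x. x \<in> {0..L} \<Longrightarrow> (phi' has_real_derivative phi'' x) (at x within {0..L})"
   and pc: "continuous_on {0..L} phi''"
   and pL: "phi L = 0" "phi' L = 0" and p0: "phi 0 * H' 0 = 0"
  shows "(\<lambda>s. mass (u s) * integral {0..L} (\<lambda>x. phi'' x * H (u s x) - phi x * H'' (u s x) * (ux s x)^2))
           integrable_on {a..b}"
    and "integral {0..L} (\<lambda>x. phi x * H (u b x)) - integral {0..L} (\<lambda>x. phi x * H (u a x)) =
         integral {a..b} (\<lambda>s. mass (u s) * integral {0..L} (\<lambda>x. phi'' x * H (u s x) - phi x * H'' (u s x) * (ux s x)^2))"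
proof -
  have cH: "continuous_on UNIV H" using HD
    by (meson DERIV_isCont continuous_at_imp_continuous_on)
  have cH': "continuous_on UNIV H'" using HD'
    by (meson DERIV_isCont continuous_at_imp_continuous_on)
  have cphi: "continuous_on {0..L} phi"
    using pD by (meson DERIV_continuous continuous_on_eq_continuous_within)
  have cphi': "continuous_on {0..L} phi'"
    using pD' by (meson DERIV_continuous continuous_on_eq_continuous_within)
  define F where "F s x = phi x * (H' (u s x) * ut s x)" for s x
  have cF: "continuous_on ({a..b} \<times> {0..L}) (\<lambda>p. F (fst p) (snd p))"
    unfolding F_def
    apply (intro continuous_intros)
      apply (rule continuous_on_compose2[OF cphi]) apply (auto intro!: continuous_intros)[2]
     apply (rule continuous_on_compose2[OF cH' cont2[OF cu ab(1)]]) apply simp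
    apply (rule cont2[OF cut ab(1)])
    done
  have ftc: "integral {a..b} (\<lambda>s. F s x) = phi x * H (u b x) - phi x * H (u a x)" if x: "x \<in> {0..L}" for x
  proof -
    have "((\<lambda>s. phi x * H (u s x)) has_vector_derivative F s x) (at s within {a..b})" if "s \<in> {a..b}" for s
    proof -
      have "((\<lambda>s. H (u s x)) has_real_derivative H' (u s x) * ut s x) (at s)"
        using DERIV_chain2[OF HD dt] that ab x by auto
      then have "((\<lambda>s. phi x * H (u s x)) has_real_derivative F s x) (at s)"
        unfolding F_def by (rule DERIV_cmult)
      then show ?thesis
        by (simp add: has_real_derivative_iff_has_vector_derivative has_vector_derivative_at_within)
    qed
    from fundamental_theorem_of_calculus[OF ab(2) this] show ?thesis by (simp add: integral_unique)
  qed
  have space: "integral {0..L} (F s) = mass (u s) * integral {0..L} (\<lambda>x. phi'' x * H (u s x) - phi x * H'' (u s x) * (ux s x)^2)"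
    if s: "s \<in> {a..b}" for s
  proof -
    have s0: "s > 0" using s ab by auto
    have c_u: "continuous_on {0..L} (u s)" by (rule cont1[OF cu s0])
    have c_ux: "continuous_on {0..L} (ux s)" by (rule cont1[OF cux s0])
    have c_uxx: "continuous_on {0..L} (uxx s)" by (rule cont1[OF cuxx s0])
    have cHu: "continuous_on {0..L} (\<lambda>x. H (u s x))" by (rule continuous_on_compose2[OF cH c_u]) auto
    have cH'u: "continuous_on {0..L} (\<lambda>x. H' (u s x))" by (rule continuous_on_compose2[OF cH' c_u]) auto
    have cH''u: "continuous_on {0..L} (\<lambda>x. H'' (u s x))" by (rule continuous_on_compose2[OF Hc c_u]) auto
    define A where "A x = phi x * H' (u s x) * uxx s x" for x
    define B where "B x = phi'' x * H (u s x) - phi x * H'' (u s x) * (ux s x)^2" for x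
    have iA: "A integrable_on {0..L}" unfolding A_def
      by (intro integrable_continuous_interval continuous_intros cphi cH'u c_uxx)
    have iB: "B integrable_on {0..L}" unfolding B_def
      by (intro integrable_continuous_interval continuous_intros cphi cH''u c_ux pc cHu)
    have "integral {0..L} (F s) = integral {0..L} (\<lambda>x. mass (u s) * A x)"
    proof (rule integral_spike[of "{0}"])
      show "negligible {0::real}" by simp
      fix x assume "x \<in> {0..L} - {0}"
      then have "x > 0" by auto
      then show "mass (u s) * A x = F s x" unfolding A_def F_def using eqn[OF s0] by simp
    qed
    also have "\<dots> = mass (u s) * integral {0..L} A" by simp
    also have "integral {0..L} A = integral {0..L} B"
    proof -
      define P where "P x = phi x * H' (u s x) * ux s x - phi' x * H (u s x)" for x
      define D where "D x = phi' x * H' (u s x) * ux s x + phi x * (H'' (u s x) * ux s x) * ux s x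
          + phi x * H' (u s x) * uxx s x - (phi'' x * H (u s x) + phi' x * (H' (u s x) * ux s x))" for x
      have "(P has_vector_derivative D x) (at x within {0..L})" if x: "x \<in> {0..L}" for x
      proof -
        have x0: "x \<ge> 0" using x by auto
        have d1: "((\<lambda>y. u s y) has_real_derivative ux s x) (at x within {0..L})"
          by (rule DERIV_subset[OF dx[OF s0 x0]]) auto
        have d2: "((\<lambda>y. ux s y) has_real_derivative uxx s x) (at x within {0..L})"
          by (rule DERIV_subset[OF dxx[OF s0 x0]]) auto
        have d3: "((\<lambda>y. H (u s y)) has_real_derivative H' (u s x) * ux s x) (at x within {0..L})"
          by (rule DERIV_chain2[OF HD d1])
        have d4: "((\<lambda>y. H' (u s y)) has_real_derivative H'' (u s x) * ux s x) (at x within {0..L})"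
          by (rule DERIV_chain2[OF HD' d1])
        have "(P has_real_derivative D x) (at x within {0..L})"
          unfolding P_def D_def
          apply (rule DERIV_cong)
           apply (rule DERIV_diff)
            apply (rule DERIV_mult)
             apply (rule DERIV_mult)
              apply (rule pD[OF x])
             apply (rule d4)
            apply (rule d2)
           apply (rule DERIV_mult)
            apply (rule pD'[OF x])
           apply (rule d3)
          by (simp add: algebra_simps)
        then show ?thesis by (simp add: has_real_derivative_iff_has_vector_derivative)
      qed
      from fundamental_theorem_of_calculus[OF less_imp_le[OF L] this]
      have "(D has_integral P L - P 0) {0..L}" .
      moreover have "P L = 0" unfolding P_def using pL by simp
      moreover have "P 0 = 0" unfolding P_def using bc[OF s0] H0 p0 by simp
      moreover have "D = (\<lambda>x. A x - B x)" unfolding D_def A_def B_def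
        by (rule ext) (simp add: power2_eq_square algebra_simps)
      ultimately have "((\<lambda>x. A x - B x) has_integral 0) {0..L}" by simp
      then have "integral {0..L} (\<lambda>x. A x - B x) = 0" by (rule integral_unique)
      then show ?thesis using integral_diff[OF iA iB] by simp
    qed
    finally show ?thesis unfolding B_def .
  qed
  have swap: "integral {0..L} (\<lambda>x. integral {a..b} (\<lambda>s. F s x)) = integral {a..b} (\<lambda>s. integral {0..L} (F s))"
  proof -
    have "continuous_on (cbox (0,a) (L,b)) (\<lambda>(x,s). F s x)"
    proof -
      have "continuous_on ({0..L} \<times> {a..b}) ((\<lambda>p. F (fst p) (snd p)) \<circ> prod.swap)"
        by (rule continuous_on_compose[OF continuous_on_swap]) (simp add: cF product_swap)
      then show ?thesis by (simp add: cbox_Pair_eq o_def case_prod_beta)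
    qed
    from integral_swap_continuous[OF this] show ?thesis by simp
  qed
  have intF: "(\<lambda>s. integral {0..L} (F s)) integrable_on {a..b}"
  proof -
    have "continuous_on {a..b} (\<lambda>s. integral (cbox 0 L) (F s))"
      by (rule integral_continuous_on_param) (use cF in \<open>simp add: case_prod_beta\<close>)
    then show ?thesis by (intro integrable_continuous_interval) simp
  qed
  show "(\<lambda>s. mass (u s) * integral {0..L} (\<lambda>x. phi'' x * H (u s x) - phi x * H'' (u s x) * (ux s x)^2))
           integrable_on {a..b}"
    by (rule integrable_eq[OF intF]) (simp add: space)
  have "integral {0..L} (\<lambda>x. phi x * H (u b x)) - integral {0..L} (\<lambda>x. phi x * H (u a x))
      = integral {0..L} (\<lambda>x. phi x * H (u b x) - phi x * H (u a x))"
  proof (rule integral_diff[symmetric])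
    have "b > 0" "a > 0" using ab by auto
    then show "(\<lambda>x. phi x * H (u b x)) integrable_on {0..L}" "(\<lambda>x. phi x * H (u a x)) integrable_on {0..L}"
      by (auto intro!: integrable_continuous_interval continuous_intros cphi
             continuous_on_compose2[OF cH cont1[OF cu]])
  qed
  also have "\<dots> = integral {0..L} (\<lambda>x. integral {a..b} (\<lambda>s. F s x))"
    by (rule integral_cong) (simp add: ftc)
  also have "\<dots> = integral {a..b} (\<lambda>s. integral {0..L} (F s))" by (rule swap)
  also have "\<dots> = integral {a..b} (\<lambda>s. mass (u s) * integral {0..L} (\<lambda>x. phi'' x * H (u s x) - phi x * H'' (u s x) * (ux s x)^2))"
    by (rule integral_cong) (simp add: space)
  finally show "integral {0..L} (\<lambda>x. phi x * H (u b x)) - integral {0..L} (\<lambda>x. phi x * H (u a x)) =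
         integral {a..b} (\<lambda>s. mass (u s) * integral {0..L} (\<lambda>x. phi'' x * H (u s x) - phi x * H'' (u s x) * (ux s x)^2))" .
qed

end

definition cw :: "real \<Rightarrow> real \<Rightarrow> real" where "cw L x = (1 - (x * inverse L)\<^sup>2) ^ 3"
definition cw1 :: "real \<Rightarrow> real \<Rightarrow> real" where
  "cw1 L x = 3 * (1 - (x * inverse L)\<^sup>2)\<^sup>2 * (- 2 * x * (inverse L)\<^sup>2)"
definition cw2 :: "real \<Rightarrow> real \<Rightarrow> real" where
  "cw2 L x = 6 * (1 - (x * inverse L)\<^sup>2) * (- 2 * x * (inverse L)\<^sup>2)\<^sup>2
     + 3 * (1 - (x * inverse L)\<^sup>2)\<^sup>2 * (- 2 * (inverse L)\<^sup>2)"

lemma xiL: fixes x L :: real shows "(x * inverse L)\<^sup>2 = x\<^sup>2 / L\<^sup>2" "- 2 * x * (inverse L)\<^sup>2 = - 2 * x / L\<^sup>2"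
  "- 2 * (inverse L)\<^sup>2 = - 2 / L\<^sup>2"
  by (simp_all add: power_mult_distrib field_simps power_inverse)

lemma cw_deriv: "(cw L has_real_derivative cw1 L x) (at x)"
  unfolding cw_def cw1_def
  by (auto intro!: derivative_eq_intros simp: power2_eq_square algebra_simps)

lemma cw1_deriv: "(cw1 L has_real_derivative cw2 L x) (at x)"
  unfolding cw1_def cw2_def
  by (auto intro!: derivative_eq_intros simp: power2_eq_square algebra_simps)

lemma cw_cont: "continuous_on S (cw L)" "continuous_on S (cw1 L)" "continuous_on S (cw2 L)"
  unfolding cw_def cw1_def cw2_def by (auto intro!: continuous_intros)

lemma cw_at_L: "L \<noteq> 0 \<Longrightarrow> cw L L = 0" "L \<noteq> 0 \<Longrightarrow> cw1 L L = 0"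
  unfolding cw_def cw1_def by (auto simp: xiL)

lemma w_bounds:
  fixes x L :: real
  assumes "0 \<le> x" "x \<le> L" "0 < L"
  shows "0 \<le> 1 - x\<^sup>2 / L\<^sup>2" "1 - x\<^sup>2 / L\<^sup>2 \<le> 1" "\<bar>- 2 * x / L\<^sup>2\<bar> \<le> 2 / L"
proof -
  have "x\<^sup>2 \<le> L\<^sup>2" using assms by (intro power_mono) auto
  then show "0 \<le> 1 - x\<^sup>2 / L\<^sup>2" using assms by (simp add: field_simps)
  show "1 - x\<^sup>2 / L\<^sup>2 \<le> 1" by simp
  have "2 * x / L\<^sup>2 \<le> 2 * L / L\<^sup>2" using assms by (intro divide_right_mono) auto
  also have "\<dots> = 2 / L" using assms by (simp add: power2_eq_square)
  finally show "\<bar>- 2 * x / L\<^sup>2\<bar> \<le> 2 / L" using assms by simp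
qed

lemma cw_bounds:
  fixes x L :: real
  assumes "0 \<le> x" "x \<le> L" "0 < L"
  shows "0 \<le> cw L x" "cw L x \<le> 1" "\<bar>cw1 L x\<bar> \<le> 6 / L" "\<bar>cw2 L x\<bar> \<le> 30 / L\<^sup>2"
proof -
  note w = w_bounds[OF assms]
  define w where "w = 1 - x\<^sup>2 / L\<^sup>2"
  define d where "d = - 2 * x / L\<^sup>2"
  have w0: "0 \<le> w" and w1: "w \<le> 1" and dd: "\<bar>d\<bar> \<le> 2 / L" using w unfolding w_def d_def by auto
  note xiL[simp]
  show "0 \<le> cw L x" unfolding cw_def using w0 w_def by simp
  show "cw L x \<le> 1" unfolding cw_def using w0 w1 w_def by (simp add: power_le_one)
  have w2: "w\<^sup>2 \<le> 1" using w0 w1 by (simp add: power_le_one)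
  have "\<bar>cw1 L x\<bar> = 3 * w\<^sup>2 * \<bar>d\<bar>" unfolding cw1_def w_def d_def by (simp add: abs_mult power_inverse divide_inverse)
  also have "\<dots> \<le> 3 * 1 * (2 / L)" using w2 dd by (intro mult_mono) auto
  finally show "\<bar>cw1 L x\<bar> \<le> 6 / L" by simp
  have d2: "d\<^sup>2 \<le> (2/L)\<^sup>2" using dd by (metis abs_le_square_iff abs_of_nonneg assms(3) divide_nonneg_pos zero_le_numeral less_imp_le)
  have "\<bar>cw2 L x\<bar> = \<bar>6 * w * d\<^sup>2 + 3 * w\<^sup>2 * (- 2 / L\<^sup>2)\<bar>"
    unfolding cw2_def w_def d_def xiL by simp
  also have "\<dots> \<le> \<bar>6 * w * d\<^sup>2\<bar> + \<bar>3 * w\<^sup>2 * (- 2 / L\<^sup>2)\<bar>" by (rule abs_triangle_ineq)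
  also have "\<dots> = 6 * w * d\<^sup>2 + 3 * w\<^sup>2 * (2 / L\<^sup>2)" using w0 by (simp add: abs_mult)
  also have "\<dots> \<le> 6 * 1 * (2/L)\<^sup>2 + 3 * 1 * (2 / L\<^sup>2)"
    using w0 w1 w2 d2 by (intro add_mono mult_mono) auto
  also have "\<dots> = 30 / L\<^sup>2" by (simp add: power2_eq_square field_simps)
  finally show "\<bar>cw2 L x\<bar> \<le> 30 / L\<^sup>2" .
qed

lemma cw_mono:
  fixes x L L' :: real
  assumes "0 \<le> x" "x \<le> L" "L \<le> L'" "0 < L"
  shows "cw L x \<le> cw L' x"
proof -
  have "x\<^sup>2 / L'\<^sup>2 \<le> x\<^sup>2 / L\<^sup>2" using assms by (intro divide_left_mono power_mono mult_pos_pos) auto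
  then show ?thesis unfolding cw_def xiL using w_bounds[OF assms(1,2,4)] by (intro power_mono) auto
qed

lemma cw_lower:
  fixes x L R :: real
  assumes "0 \<le> x" "x \<le> R" "2 * R \<le> L" "0 < R"
  shows "27/64 \<le> cw L x"
proof -
  have L: "0 < L" using assms by auto
  have "x\<^sup>2 \<le> R\<^sup>2" using assms by (intro power_mono) auto
  also have "(2 * R)\<^sup>2 \<le> L\<^sup>2" using assms by (intro power_mono) auto
  then have "R\<^sup>2 \<le> L\<^sup>2 / 4" by (simp add: power_mult_distrib)
  finally have "x\<^sup>2 / L\<^sup>2 \<le> 1/4" using L by (simp add: field_simps)
  then have "3/4 \<le> 1 - x\<^sup>2 / L\<^sup>2" by simp
  then have "(3/4::real)^3 \<le> (1 - x\<^sup>2 / L\<^sup>2)^3" by (rule power_mono) auto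
  then show ?thesis unfolding cw_def xiL by (simp add: power_divide)
qed

lemma cw_lim: "(\<lambda>n. cw (real n) x) \<longlonglongrightarrow> 1"
proof -
  have "(\<lambda>n. x\<^sup>2 * (inverse (real n))\<^sup>2) \<longlonglongrightarrow> x\<^sup>2 * 0\<^sup>2"
    by (intro tendsto_intros lim_inverse_n)
  then have "(\<lambda>n. x\<^sup>2 / (real n)\<^sup>2) \<longlonglongrightarrow> 0"
    by (simp add: field_simps power2_eq_square)
  then have "(\<lambda>n. (1 - x\<^sup>2 / (real n)\<^sup>2) ^ 3) \<longlonglongrightarrow> (1 - 0) ^ 3"
    by (intro tendsto_intros)
  then show ?thesis unfolding cw_def xiL by simp
qed

lemma negpow_deriv:
  assumes "n \<ge> 1"
  shows "((\<lambda>v::real. (max 0 (-v))^(Suc n)) has_real_derivative - real (Suc n) * (max 0 (-v))^n) (at v)"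
proof (cases "v < 0")
  case True
  have d0: "((\<lambda>v::real. (-v)^(Suc n)) has_real_derivative real (Suc n) * (-v)^n * (-1)) (at v)"
    using DERIV_chain2[OF DERIV_pow[of "Suc n" "-v"] DERIV_minus[OF DERIV_ident, of v]] by simp
  have d: "((\<lambda>v::real. (-v)^(Suc n)) has_real_derivative - real (Suc n) * (-v)^n) (at v)"
    using d0 by (simp only: mult.assoc[symmetric] mult_minus_right mult_1_right mult.commute[of _ "-1"] mult_minus_left) 
  show ?thesis
    apply (rule has_field_derivative_transform_within_open[where S="{..<0}"])
    using d True by auto
next
  case False
  show ?thesis
  proof (cases "v > 0")
    case True
    show ?thesis
      apply (rule has_field_derivative_transform_within_open[where S="{0<..}" and f="\<lambda>_. 0"])
      using True assms by (auto simp: zero_power)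
  next
    case False
    with \<open>\<not> v < 0\<close> have v: "v = 0" by auto
    have "((\<lambda>h::real. ((max 0 (-(0 + h)))^(Suc n) - (max 0 (-0))^(Suc n)) / h) \<longlongrightarrow> 0) (at 0)"
    proof (rule Lim_null_comparison)
      show "\<forall>\<^sub>F h in at 0. norm (((max 0 (-(0 + h)))^(Suc n) - (max 0 (-0))^(Suc n)) / h) \<le> \<bar>h\<bar> ^ n"
      proof (rule always_eventually, intro allI)
        fix h :: real
        have m: "max 0 (-h) \<le> \<bar>h\<bar>" "0 \<le> max 0 (-h)" by auto
        have "norm (((max 0 (-(0 + h)))^(Suc n) - (max 0 (-0))^(Suc n)) / h) = (max 0 (-h))^(Suc n) / \<bar>h\<bar>"
          by (simp add: abs_divide)
        also have "\<dots> \<le> \<bar>h\<bar> ^ n"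
        proof (cases "h = 0")
          case False
          have "(max 0 (-h))^(Suc n) \<le> \<bar>h\<bar>^(Suc n)" using m by (intro power_mono) auto
          then show ?thesis using False by (simp add: divide_le_eq mult.commute)
        qed simp
        finally show "norm (((max 0 (-(0 + h)))^(Suc n) - (max 0 (-0))^(Suc n)) / h) \<le> \<bar>h\<bar> ^ n" .
      qed
      have "((\<lambda>h::real. \<bar>h\<bar> ^ n) \<longlongrightarrow> \<bar>0\<bar> ^ n) (at 0)" by (intro tendsto_intros)
      moreover have "\<bar>0::real\<bar> ^ n = 0" using assms by simp
      ultimately show "((\<lambda>h::real. \<bar>h\<bar> ^ n) \<longlongrightarrow> 0) (at 0)" by metis
    qed
    moreover have "(- real (Suc n)) * (max 0 (- v)) ^ n = 0" using assms v by simp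
    ultimately show ?thesis unfolding DERIV_def v using assms by (simp add: power_0_left)
  qed
qed

definition G :: "real \<Rightarrow> real" where "G v = (max 0 (-v))^3"
definition G1 :: "real \<Rightarrow> real" where "G1 v = - 3 * (max 0 (-v))^2"
definition G2 :: "real \<Rightarrow> real" where "G2 v = 6 * max 0 (-v)"

lemma G_deriv: "(G has_real_derivative G1 v) (at v)"
  using negpow_deriv[of 2 v] unfolding G_def G1_def by (simp add: numeral_eq_Suc)

lemma G1_deriv: "(G1 has_real_derivative G2 v) (at v)"
proof -
  have "((\<lambda>v::real. (max 0 (-v))^(Suc 1)) has_real_derivative - real (Suc 1) * (max 0 (-v))^1) (at v)"
    by (rule negpow_deriv) simp
  then have "((\<lambda>v. - 3 * (max 0 (-v))^2) has_real_derivative - 3 * (- real (Suc 1) * (max 0 (-v))^1)) (at v)"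
    by (intro DERIV_cmult) (simp add: numeral_eq_Suc)
  then show ?thesis unfolding G1_def G2_def by simp
qed

lemma G_cont: "continuous_on UNIV G2" unfolding G2_def by (intro continuous_intros)
lemma G_simps: "G 0 = 0" "G1 0 = 0" unfolding G_def G1_def by auto
lemma G_nonneg: "G v \<ge> 0" "G2 v \<ge> 0" unfolding G_def G2_def by auto
lemma G_zero_iff: "G v = 0 \<longleftrightarrow> v \<ge> 0" unfolding G_def by (auto simp: max_def)

lemma G_bound:
  assumes "\<bar>v\<bar> \<le> C"
  shows "\<bar>G v\<bar> \<le> C\<^sup>2 * \<bar>v\<bar>"
proof -
  have m: "max 0 (-v) \<le> \<bar>v\<bar>" "0 \<le> max 0 (-v)" by auto
  have "\<bar>G v\<bar> = (max 0 (-v))^2 * max 0 (-v)" unfolding G_def by (simp add: power3_eq_cube power2_eq_square)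
  also have "\<dots> \<le> C\<^sup>2 * \<bar>v\<bar>"
    using m assms by (intro mult_mono power_mono) auto
  finally show ?thesis .
qed

lemma G_lip:
  assumes "\<bar>a\<bar> \<le> C" "\<bar>b\<bar> \<le> C"
  shows "\<bar>G a - G b\<bar> \<le> 3 * C\<^sup>2 * \<bar>a - b\<bar>"
proof -
  define p where "p = max 0 (-a)"
  define q where "q = max 0 (-b)"
  have p: "0 \<le> p" "p \<le> C" and q: "0 \<le> q" "q \<le> C" using assms unfolding p_def q_def by auto
  have pq: "\<bar>p - q\<bar> \<le> \<bar>a - b\<bar>" unfolding p_def q_def by (auto simp: max_def)
  have "G a - G b = (p - q) * (p\<^sup>2 + p * q + q\<^sup>2)" unfolding G_def p_def[symmetric] q_def[symmetric]
    by (simp add: power2_eq_square power3_eq_cube algebra_simps)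
  then have "\<bar>G a - G b\<bar> = \<bar>p - q\<bar> * (p\<^sup>2 + p * q + q\<^sup>2)" using p q by (simp add: abs_mult)
  also have "\<dots> \<le> \<bar>a - b\<bar> * (C\<^sup>2 + C * C + C\<^sup>2)"
    using p q pq by (intro mult_mono add_mono power_mono) auto
  finally show ?thesis by (simp add: power2_eq_square algebra_simps)
qed

definition phi2 :: "real \<Rightarrow> real \<Rightarrow> real" where "phi2 L x = x * cw L x"
definition phi2' :: "real \<Rightarrow> real \<Rightarrow> real" where "phi2' L x = cw L x + x * cw1 L x"
definition phi2'' :: "real \<Rightarrow> real \<Rightarrow> real" where "phi2'' L x = 2 * cw1 L x + x * cw2 L x"

definition phi3 :: "real \<Rightarrow> real \<Rightarrow> real \<Rightarrow> real" where "phi3 k L x = sin (k * x) * cw L x"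
definition phi3' :: "real \<Rightarrow> real \<Rightarrow> real \<Rightarrow> real" where
  "phi3' k L x = k * cos (k * x) * cw L x + sin (k * x) * cw1 L x"
definition phi3'' :: "real \<Rightarrow> real \<Rightarrow> real \<Rightarrow> real" where
  "phi3'' k L x = - (k\<^sup>2 * sin (k * x) * cw L x) + 2 * k * cos (k * x) * cw1 L x + sin (k * x) * cw2 L x"

lemma phi2_deriv: "(phi2 L has_real_derivative phi2' L x) (at x)" "(phi2' L has_real_derivative phi2'' L x) (at x)"
  unfolding phi2_def phi2'_def phi2''_def
  by (auto intro!: derivative_eq_intros cw_deriv cw1_deriv simp: algebra_simps)

lemma phi3_deriv: "(phi3 k L has_real_derivative phi3' k L x) (at x)" "(phi3' k L has_real_derivative phi3'' k L x) (at x)"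
  unfolding phi3_def phi3'_def phi3''_def
  by (auto intro!: derivative_eq_intros cw_deriv cw1_deriv simp: algebra_simps power2_eq_square)

lemma phi_cont: "continuous_on S (phi2'' L)" "continuous_on S (phi3'' k L)"
  unfolding phi2''_def phi3''_def by (auto intro!: continuous_intros cw_cont)

lemma phi_at: "L \<noteq> 0 \<Longrightarrow> phi2 L L = 0" "L \<noteq> 0 \<Longrightarrow> phi2' L L = 0"
  "L \<noteq> 0 \<Longrightarrow> phi3 k L L = 0" "L \<noteq> 0 \<Longrightarrow> phi3' k L L = 0" "phi2 L 0 = 0" "phi3 k L 0 = 0"
  unfolding phi2_def phi2'_def phi3_def phi3'_def by (auto simp: cw_at_L)

lemma phi2_bound:
  assumes "0 \<le> x" "x \<le> L" "0 < L"
  shows "\<bar>phi2'' L x\<bar> \<le> 42 / L"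
proof -
  note b = cw_bounds[OF assms]
  have "\<bar>phi2'' L x\<bar> \<le> 2 * \<bar>cw1 L x\<bar> + x * \<bar>cw2 L x\<bar>"
    unfolding phi2''_def using assms by (auto simp: abs_mult intro!: order.trans[OF abs_triangle_ineq])
  also have "\<dots> \<le> 2 * (6 / L) + L * (30 / L\<^sup>2)"
    using b assms by (intro add_mono mult_mono) auto
  also have "\<dots> = 42 / L" using assms by (simp add: power2_eq_square field_simps)
  finally show ?thesis .
qed

lemma phi3_bound:
  assumes "0 \<le> x" "x \<le> L" "0 < L"
  shows "\<bar>phi3'' k L x + k\<^sup>2 * sin (k * x) * cw L x\<bar> \<le> 12 * \<bar>k\<bar> / L + 30 / L\<^sup>2"
proof -
  note b = cw_bounds[OF assms]
  have "\<bar>phi3'' k L x + k\<^sup>2 * sin (k * x) * cw L x\<bar> = \<bar>2 * k * cos (k * x) * cw1 L x + sin (k * x) * cw2 L x\<bar>"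
    unfolding phi3''_def by simp
  also have "\<dots> \<le> 2 * \<bar>k\<bar> * \<bar>cos (k * x)\<bar> * \<bar>cw1 L x\<bar> + \<bar>sin (k * x)\<bar> * \<bar>cw2 L x\<bar>"
    by (auto simp: abs_mult intro!: order.trans[OF abs_triangle_ineq])
  also have "\<dots> \<le> 2 * \<bar>k\<bar> * 1 * (6 / L) + 1 * (30 / L\<^sup>2)"
    using b assms by (intro add_mono mult_mono) auto
  finally show ?thesis by simp
qed

lemma hk_leb:
  fixes g :: "real \<Rightarrow> real"
  assumes "continuous_on {a..b} g"
  shows "set_integrable lborel {a..b} g" "integral {a..b} g = (LINT x:{a..b}|lborel. g x)"
proof -
  show si: "set_integrable lborel {a..b} g"
    unfolding set_integrable_def by (rule borel_integrable_compact) (auto intro: assms)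
  show "integral {a..b} g = (LINT x:{a..b}|lborel. g x)"
    using set_borel_integral_eq_integral(2)[OF si] by simp
qed

lemma set_integral_sub_le:
  fixes f :: "real \<Rightarrow> real"
  assumes "set_integrable lborel A f" "B \<subseteq> A" "B \<in> sets lborel" "\<And>x. x \<in> A \<Longrightarrow> 0 \<le> f x"
  shows "(LINT x:B|lborel. f x) \<le> (LINT x:A|lborel. f x)"
proof -
  have "(LINT x:B|lborel. f x) = (LINT x:A|lborel. indicator B x * f x)"
    unfolding set_lebesgue_integral_def using assms(2)
    by (intro Bochner_Integration.integral_cong) (auto simp: indicator_def)
  also have "\<dots> \<le> (LINT x:A|lborel. f x)"
  proof (rule set_integral_mono)
    have eq: "(\<lambda>x. indicator A x *\<^sub>R (indicator B x * f x)) = (\<lambda>x. indicator B x *\<^sub>R f x)"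
      using assms(2) by (intro ext) (auto simp: indicator_def)
    show "set_integrable lborel A (\<lambda>x. indicator B x * f x)"
      using set_integrable_subset[OF assms(1,3,2)] unfolding set_integrable_def eq .
  qed (use assms in \<open>auto simp: indicator_def\<close>)
  finally show ?thesis .
qed

locale sol2 = sol +
  fixes uin :: "real \<Rightarrow> real"
  assumes init: "\<And>x. x \<ge> 0 \<Longrightarrow> u 0 x = uin x"
   and L1: "\<And>s. s \<ge> 0 \<Longrightarrow> set_integrable lborel {0..} (u s)"
   and L1c: "\<And>s. s \<ge> 0 \<Longrightarrow> ((\<lambda>r. LINT x:{0..}|lborel. \<bar>u r x - u s x\<bar>) \<longlongrightarrow> 0) (at s within {0..})"
   and bnd: "\<And>T. T \<ge> 0 \<Longrightarrow> \<exists>C. \<forall>s\<in>{0..T}. \<forall>x\<ge>0. \<bar>u s x\<bar> \<le> C"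
begin

definition D :: "real \<Rightarrow> real \<Rightarrow> real" where "D r s = (LINT x:{0..}|lborel. \<bar>u r x - u s x\<bar>)"
definition nrm :: "real \<Rightarrow> real" where "nrm s = (LINT x:{0..}|lborel. \<bar>u s x\<bar>)"

lemma meas_u: "s \<ge> 0 \<Longrightarrow> (\<lambda>x. indicator {0..} x *\<^sub>R u s x) \<in> borel_measurable lborel"
  using L1 unfolding set_integrable_def by blast

lemma meas_wHu:
  fixes w H :: "real \<Rightarrow> real"
  assumes s: "s \<ge> 0" and w: "continuous_on {0..L} w" and H: "continuous_on UNIV H" and H0: "H 0 = 0"
  shows "set_borel_measurable lborel {0..L} (\<lambda>x. w x * H (u s x))"
proof -
  have "(\<lambda>x. indicator {0..L} x *\<^sub>R (w x * H (u s x))) =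
        (\<lambda>x. (indicator {0..L} x *\<^sub>R w x) * H (indicator {0..} x *\<^sub>R u s x))"
    by (rule ext) (auto simp: indicator_def H0 real_scaleR_def)
  moreover have "(\<lambda>x. (indicator {0..L} x *\<^sub>R w x) * H (indicator {0..} x *\<^sub>R u s x)) \<in> borel_measurable lborel"
  proof (intro borel_measurable_times borel_measurable_continuous_on[OF H])
    show "(\<lambda>x. indicator {0..L} x *\<^sub>R w x) \<in> borel_measurable lborel"
      using borel_measurable_continuous_on_indicator[OF _ w] by simp
    show "(\<lambda>x. indicator {0..} x *\<^sub>R u s x) \<in> borel_measurable lborel" by (rule meas_u[OF s])
  qed
  ultimately show ?thesis unfolding set_borel_measurable_def by simp
qed

lemma approx0:
  fixes w H :: "real \<Rightarrow> real"
  assumes s: "s \<ge> 0" and r: "r \<ge> 0"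
    and w: "continuous_on {0..L} w" and wb: "\<And>x. x \<in> {0..L} \<Longrightarrow> \<bar>w x\<bar> \<le> W"
    and H: "continuous_on UNIV H" and H0: "H 0 = 0" and W: "W \<ge> 0" and K: "K \<ge> 0"
    and Hl: "\<And>a b. \<bar>a\<bar> \<le> C \<Longrightarrow> \<bar>b\<bar> \<le> C \<Longrightarrow> \<bar>H a - H b\<bar> \<le> K * \<bar>a - b\<bar>"
    and us: "\<And>x. x \<ge> 0 \<Longrightarrow> \<bar>u s x\<bar> \<le> C" and ur: "\<And>x. x \<ge> 0 \<Longrightarrow> \<bar>u r x\<bar> \<le> C"
  shows "set_integrable lborel {0..L} (\<lambda>x. w x * H (u s x))"
    and "\<bar>(LINT x:{0..L}|lborel. w x * H (u s x)) - (LINT x:{0..L}|lborel. w x * H (u r x))\<bar> \<le> W * K * D s r"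
proof -
  have C: "C \<ge> 0" using us[of 0] by auto
  have si: "set_integrable lborel {0..L} (\<lambda>x. w x * H (u q x))" if q: "q \<ge> 0" "\<And>x. x \<ge> 0 \<Longrightarrow> \<bar>u q x\<bar> \<le> C" for q
  proof (rule set_integrable_bound[OF _ meas_wHu[OF q(1) w H H0]])
    show "set_integrable lborel {0..L} (\<lambda>x. (W * K) * u q x)"
      by (intro set_integrable_mult_right set_integrable_subset[OF L1[OF q(1)]]) auto
    show "AE x in lborel. x \<in> {0..L} \<longrightarrow> norm (w x * H (u q x)) \<le> norm (W * K * u q x)"
    proof (rule AE_I2, intro impI)
      fix x :: real assume x: "x \<in> {0..L}"
      have "\<bar>H (u q x)\<bar> \<le> K * \<bar>u q x\<bar>" using Hl[of "u q x" 0] q(2)[of x] x C H0 by auto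
      then have "\<bar>w x * H (u q x)\<bar> \<le> W * (K * \<bar>u q x\<bar>)"
        unfolding abs_mult using wb[OF x] by (intro mult_mono) auto
      then show "norm (w x * H (u q x)) \<le> norm (W * K * u q x)" using W K x
        by (simp add: abs_mult mult.assoc)
    qed
  qed
  show "set_integrable lborel {0..L} (\<lambda>x. w x * H (u s x))" by (rule si[OF s us])
  have i1: "set_integrable lborel {0..L} (\<lambda>x. w x * H (u s x))" by (rule si[OF s us])
  have i2: "set_integrable lborel {0..L} (\<lambda>x. w x * H (u r x))" by (rule si[OF r ur])
  have d0: "set_integrable lborel {0..} (\<lambda>x. \<bar>u s x - u r x\<bar>)"
    by (intro set_integrable_abs set_integral_diff(1) L1 s r)
  have d1: "set_integrable lborel {0..L} (\<lambda>x. \<bar>u s x - u r x\<bar>)"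
    by (rule set_integrable_subset[OF d0]) auto
  have "\<bar>(LINT x:{0..L}|lborel. w x * H (u s x)) - (LINT x:{0..L}|lborel. w x * H (u r x))\<bar>
      = \<bar>LINT x:{0..L}|lborel. w x * H (u s x) - w x * H (u r x)\<bar>"
    by (simp add: set_integral_diff(2)[OF i1 i2])
  also have "\<dots> \<le> (LINT x:{0..L}|lborel. \<bar>w x * H (u s x) - w x * H (u r x)\<bar>)"
    using set_integral_norm_bound[OF set_integral_diff(1)[OF i1 i2]] by simp
  also have "\<dots> \<le> (LINT x:{0..L}|lborel. (W * K) * \<bar>u s x - u r x\<bar>)"
  proof (rule set_integral_mono)
    show "set_integrable lborel {0..L} (\<lambda>x. \<bar>w x * H (u s x) - w x * H (u r x)\<bar>)"
      by (intro set_integrable_abs set_integral_diff(1) i1 i2)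
    show "set_integrable lborel {0..L} (\<lambda>x. (W * K) * \<bar>u s x - u r x\<bar>)"
      by (intro set_integrable_mult_right d1)
    fix x :: real assume x: "x \<in> {0..L}"
    have "\<bar>w x * H (u s x) - w x * H (u r x)\<bar> = \<bar>w x\<bar> * \<bar>H (u s x) - H (u r x)\<bar>"
      by (simp add: abs_mult right_diff_distrib[symmetric])
    also have "\<dots> \<le> W * (K * \<bar>u s x - u r x\<bar>)"
      using wb[OF x] Hl[OF us ur, of x] x W by (intro mult_mono) auto
    finally show "\<bar>w x * H (u s x) - w x * H (u r x)\<bar> \<le> (W * K) * \<bar>u s x - u r x\<bar>" by simp
  qed
  also have "\<dots> = (W * K) * (LINT x:{0..L}|lborel. \<bar>u s x - u r x\<bar>)"
    by (rule set_integral_mult_right)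
  also have "\<dots> \<le> (W * K) * D s r"
    unfolding D_def using W K by (intro mult_left_mono set_integral_sub_le[OF d0]) auto
  finally show "\<bar>(LINT x:{0..L}|lborel. w x * H (u s x)) - (LINT x:{0..L}|lborel. w x * H (u r x))\<bar> \<le> W * K * D s r" .
qed

end

context sol2 begin

lemma D_nonneg: "D r s \<ge> 0"
  unfolding D_def set_lebesgue_integral_def by (intro integral_nonneg_AE) (auto simp: indicator_def)

lemma mass_diff: assumes "r \<ge> 0" "s \<ge> 0" shows "\<bar>mass (u r) - mass (u s)\<bar> \<le> D r s"
proof -
  have "mass (u r) - mass (u s) = (LINT x:{0..}|lborel. u r x - u s x)"
    unfolding mass_def using set_integral_diff(2)[OF L1 L1] assms by simp
  then show ?thesis unfolding D_def
    using set_integral_norm_bound[OF set_integral_diff(1)[OF L1 L1]] assms by simp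
qed

lemma nrm_diff: assumes "r \<ge> 0" "s \<ge> 0" shows "\<bar>nrm r - nrm s\<bar> \<le> D r s"
proof -
  have i: "set_integrable lborel {0..} (\<lambda>x. \<bar>u q x\<bar>)" if "q \<ge> 0" for q
    by (rule set_integrable_abs[OF L1[OF that]])
  have "nrm r - nrm s = (LINT x:{0..}|lborel. \<bar>u r x\<bar> - \<bar>u s x\<bar>)"
    unfolding nrm_def using set_integral_diff(2)[OF i i] assms by simp
  also have "\<bar>\<dots>\<bar> \<le> (LINT x:{0..}|lborel. \<bar>\<bar>u r x\<bar> - \<bar>u s x\<bar>\<bar>)"
    using set_integral_norm_bound[OF set_integral_diff(1)[OF i i]] assms by simp
  also have "\<dots> \<le> D r s" unfolding D_def
    by (intro set_integral_mono set_integrable_abs set_integral_diff(1) i L1 assms) auto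
  finally show ?thesis .
qed

lemma mass_le: "s \<ge> 0 \<Longrightarrow> \<bar>mass (u s)\<bar> \<le> nrm s"
  unfolding mass_def nrm_def using set_integral_norm_bound[OF L1] by simp

lemma cont_by_D:
  assumes "\<And>r s. r \<ge> 0 \<Longrightarrow> s \<ge> 0 \<Longrightarrow> \<bar>f r - f s\<bar> \<le> D r s"
  shows "continuous_on {0..} (f :: real \<Rightarrow> real)"
proof -
  have "(f \<longlongrightarrow> f s) (at s within {0..})" if s: "s \<in> {0..}" for s
  proof -
    have "((\<lambda>r. f r - f s) \<longlongrightarrow> 0) (at s within {0..})"
    proof (rule Lim_null_comparison)
      show "\<forall>\<^sub>F r in at s within {0..}. norm (f r - f s) \<le> D r s"
        unfolding eventually_at_filter using assms s by (auto intro!: always_eventually)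
      show "((\<lambda>r. D r s) \<longlongrightarrow> 0) (at s within {0..})" unfolding D_def using L1c s by auto
    qed
    then show ?thesis by (simp add: Lim_null[symmetric])
  qed
  then show ?thesis unfolding continuous_on_def by blast
qed

lemma cont_mass: "continuous_on {0..} (\<lambda>s. mass (u s))"
  by (rule cont_by_D) (rule mass_diff)

lemma cont_nrm: "continuous_on {0..} nrm"
  by (rule cont_by_D) (rule nrm_diff)

lemma bounds:
  assumes "T \<ge> 0"
  obtains C N where "C \<ge> 0" "N \<ge> 0" "\<And>s x. s \<in> {0..T} \<Longrightarrow> x \<ge> 0 \<Longrightarrow> \<bar>u s x\<bar> \<le> C"
    "\<And>s. s \<in> {0..T} \<Longrightarrow> nrm s \<le> N" "\<And>s. s \<in> {0..T} \<Longrightarrow> \<bar>mass (u s)\<bar> \<le> N"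
proof -
  obtain C where C: "\<forall>s\<in>{0..T}. \<forall>x\<ge>0. \<bar>u s x\<bar> \<le> C" using bnd[OF assms] by blast
  have C0: "C \<ge> 0" using C assms by force
  have "continuous_on {0..T} nrm" by (rule continuous_on_subset[OF cont_nrm]) auto
  from continuous_attains_sup[OF compact_Icc _ this] assms
  obtain m where m: "m \<in> {0..T}" "\<And>s. s \<in> {0..T} \<Longrightarrow> nrm s \<le> nrm m" by auto
  have "nrm m \<ge> 0" using mass_le[of m] m by (auto intro: order.trans[OF abs_ge_zero])
  show ?thesis
  proof (rule that[OF C0 \<open>nrm m \<ge> 0\<close>])
    show "\<And>s x. s \<in> {0..T} \<Longrightarrow> x \<ge> 0 \<Longrightarrow> \<bar>u s x\<bar> \<le> C" using C by auto
    show "\<And>s. s \<in> {0..T} \<Longrightarrow> nrm s \<le> nrm m" by (rule m(2))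
    show "\<And>s. s \<in> {0..T} \<Longrightarrow> \<bar>mass (u s)\<bar> \<le> nrm m" using m(2) mass_le by (force intro: order.trans)
  qed
qed

lemma near0:
  assumes "0 < s" "0 < e"
  obtains r where "0 < r" "r \<le> s" "D r 0 < e"
proof -
  have "((\<lambda>r. D r 0) \<longlongrightarrow> 0) (at 0 within {0..})" unfolding D_def using L1c[of 0] by simp
  from tendstoD[OF this assms(2)] obtain d where d: "d > 0" "\<And>r. r \<in> {0..} \<Longrightarrow> r \<noteq> 0 \<Longrightarrow> dist r 0 < d \<Longrightarrow> dist (D r 0) 0 < e"
    unfolding eventually_at by auto
  define r where "r = min s (d/2)"
  have "0 < r" "r \<le> s" using assms d unfolding r_def by auto
  moreover have "D r 0 < e" using d(2)[of r] \<open>0 < r\<close> d(1) unfolding r_def by (auto simp: dist_real_def min_def split: if_splits)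
  ultimately show ?thesis by (rule that)
qed

end

lemma le_inv_limit:
  fixes Z K L0 :: real
  assumes "\<And>L. L \<ge> L0 \<Longrightarrow> L \<ge> 1 \<Longrightarrow> Z \<le> K / L"
  shows "Z \<le> 0"
proof (rule LIMSEQ_le_const[OF lim_const_over_n[of K]])
  show "\<exists>N. \<forall>n\<ge>N. Z \<le> K / real n"
  proof (intro exI allI impI)
    fix n assume n: "nat \<lceil>max L0 1\<rceil> \<le> n"
    then have "real n \<ge> max L0 1" by linarith
    then show "Z \<le> K / real n" using assms by auto
  qed
qed

context sol2 begin

lemma pos:
  assumes s: "0 < s" and mnn: "\<And>r. r \<in> {0..s} \<Longrightarrow> mass (u r) \<ge> 0"
    and uin_nn: "AE x in lborel. x \<in> {0..} \<longrightarrow> uin x \<ge> 0"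
    and x: "x \<ge> 0"
  shows "u s x \<ge> 0"
proof -
  obtain C N where C: "C \<ge> 0" and N: "N \<ge> 0" and Cb: "\<And>r x. r \<in> {0..s} \<Longrightarrow> x \<ge> 0 \<Longrightarrow> \<bar>u r x\<bar> \<le> C"
    and Nb: "\<And>r. r \<in> {0..s} \<Longrightarrow> nrm r \<le> N" and Mb: "\<And>r. r \<in> {0..s} \<Longrightarrow> \<bar>mass (u r)\<bar> \<le> N"
    using bounds[of s] s by auto
  define B where "B L = 30 / L\<^sup>2 * C\<^sup>2 * N" for L :: real
  have B0: "B L \<ge> 0" for L unfolding B_def using N by auto
  have stepA: "integral {0..L} (\<lambda>x. cw L x * G (u s x)) \<le> s * N * B L" if L: "L > 0" for L
  proof -
    have A1: "integral {0..L} (\<lambda>x. cw L x * G (u s x)) \<le> integral {0..L} (\<lambda>x. cw L x * G (u e x)) + s * N * B L"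
      if e: "0 < e" "e \<le> s" for e
    proof -
      have Lne: "L \<noteq> 0" using L by simp
      have p0: "cw L 0 * G1 0 = 0" by (simp add: G_simps)
      note W = weak[OF e(1) e(2) L G_deriv G1_deriv G_cont G_simps(1) cw_deriv[THEN has_field_derivative_at_within]
          cw1_deriv[THEN has_field_derivative_at_within] cw_cont(3) cw_at_L(1)[OF Lne] cw_at_L(2)[OF Lne] p0]
      have "integral {e..s} (\<lambda>r. mass (u r) * integral {0..L} (\<lambda>x. cw2 L x * G (u r x) - cw L x * G2 (u r x) * (ux r x)\<^sup>2))
          \<le> integral {e..s} (\<lambda>r. N * B L)"
      proof (rule integral_le[OF W(1)])
        show "(\<lambda>r. N * B L) integrable_on {e..s}" by (rule integrable_const_ivl)
        fix r assume r: "r \<in> {e..s}"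
        have r0: "r > 0" using r e by auto
        have rs: "r \<in> {0..s}" using r e by auto
        have cu_r: "continuous_on {0..L} (u r)" by (rule cont1[OF cu r0])
        have cux_r: "continuous_on {0..L} (ux r)" by (rule cont1[OF cux r0])
        have cG: "continuous_on {0..L} (\<lambda>x. G (u r x))"
          by (rule continuous_on_compose2[OF _ cu_r, of UNIV]) 
             (auto intro: continuous_at_imp_continuous_on DERIV_isCont[OF G_deriv])
        have cG2: "continuous_on {0..L} (\<lambda>x. G2 (u r x))"
          by (rule continuous_on_compose2[OF G_cont cu_r]) auto
        have "integral {0..L} (\<lambda>x. cw2 L x * G (u r x) - cw L x * G2 (u r x) * (ux r x)\<^sup>2)
            \<le> integral {0..L} (\<lambda>x. (30 / L\<^sup>2 * C\<^sup>2) * \<bar>u r x\<bar>)"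
        proof (rule integral_le)
          show "(\<lambda>x. cw2 L x * G (u r x) - cw L x * G2 (u r x) * (ux r x)\<^sup>2) integrable_on {0..L}"
            by (intro integrable_continuous_interval continuous_intros cw_cont cG cG2 cux_r)
          show "(\<lambda>x. (30 / L\<^sup>2 * C\<^sup>2) * \<bar>u r x\<bar>) integrable_on {0..L}"
            by (intro integrable_continuous_interval continuous_intros cu_r)
          fix x assume x: "x \<in> {0..L}"
          have b: "\<bar>cw2 L x\<bar> \<le> 30 / L\<^sup>2" "0 \<le> cw L x" using cw_bounds[of x L] x L by auto
          have g: "\<bar>G (u r x)\<bar> \<le> C\<^sup>2 * \<bar>u r x\<bar>" by (rule G_bound) (use Cb rs x in auto)
          have "cw L x * G2 (u r x) * (ux r x)\<^sup>2 \<ge> 0" using b G_nonneg by auto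
          moreover have "cw2 L x * G (u r x) \<le> (30 / L\<^sup>2) * (C\<^sup>2 * \<bar>u r x\<bar>)"
          proof -
            have "cw2 L x * G (u r x) \<le> \<bar>cw2 L x\<bar> * \<bar>G (u r x)\<bar>" by (simp add: abs_mult[symmetric])
            also have "\<dots> \<le> (30 / L\<^sup>2) * (C\<^sup>2 * \<bar>u r x\<bar>)" using b g by (intro mult_mono) auto
            finally show ?thesis .
          qed
          ultimately show "cw2 L x * G (u r x) - cw L x * G2 (u r x) * (ux r x)\<^sup>2 \<le> (30 / L\<^sup>2 * C\<^sup>2) * \<bar>u r x\<bar>"
            by simp
        qed
        also have "\<dots> = (30 / L\<^sup>2 * C\<^sup>2) * integral {0..L} (\<lambda>x. \<bar>u r x\<bar>)" by simp
        also have "\<dots> \<le> (30 / L\<^sup>2 * C\<^sup>2) * N"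
        proof (rule mult_left_mono)
          have "integral {0..L} (\<lambda>x. \<bar>u r x\<bar>) = (LINT x:{0..L}|lborel. \<bar>u r x\<bar>)"
            by (rule hk_leb(2)) (intro continuous_intros cu_r)
          also have "\<dots> \<le> nrm r" unfolding nrm_def
            by (rule set_integral_sub_le) (auto intro: set_integrable_abs L1 r0[THEN less_imp_le])
          also have "\<dots> \<le> N" by (rule Nb[OF rs])
          finally show "integral {0..L} (\<lambda>x. \<bar>u r x\<bar>) \<le> N" .
        qed simp
        finally have J: "integral {0..L} (\<lambda>x. cw2 L x * G (u r x) - cw L x * G2 (u r x) * (ux r x)\<^sup>2) \<le> B L"
          unfolding B_def by simp
        have m: "0 \<le> mass (u r)" "mass (u r) \<le> N" using mnn[OF rs] Mb[OF rs] by auto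
        show "mass (u r) * integral {0..L} (\<lambda>x. cw2 L x * G (u r x) - cw L x * G2 (u r x) * (ux r x)\<^sup>2) \<le> N * B L"
        proof -
          have "mass (u r) * integral {0..L} (\<lambda>x. cw2 L x * G (u r x) - cw L x * G2 (u r x) * (ux r x)\<^sup>2)
              \<le> mass (u r) * B L" by (rule mult_left_mono[OF J m(1)])
          also have "\<dots> \<le> N * B L" by (rule mult_right_mono[OF m(2) B0])
          finally show ?thesis .
        qed
      qed
      also have "\<dots> = (s - e) * (N * B L)" using e by simp
      also have "\<dots> \<le> s * (N * B L)" using e N B0[of L] by (intro mult_right_mono) auto
      finally show ?thesis using W(2) by simp
    qed
    have A2: "\<bar>integral {0..L} (\<lambda>x. cw L x * G (u e x))\<bar> \<le> 3 * C\<^sup>2 * D e 0" if e: "0 < e" "e \<le> s" for e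
    proof -
      have cont: "continuous_on {0..L} (\<lambda>x. cw L x * G (u e x))"
        by (intro continuous_intros cw_cont continuous_on_compose2[OF _ cont1[OF cu e(1)], of UNIV])
           (auto intro: continuous_at_imp_continuous_on DERIV_isCont[OF G_deriv])
      have cG: "continuous_on UNIV G" by (auto intro: continuous_at_imp_continuous_on DERIV_isCont[OF G_deriv])
      have ap: "\<bar>(LINT x:{0..L}|lborel. cw L x * G (u e x)) - (LINT x:{0..L}|lborel. cw L x * G (u 0 x))\<bar> \<le> 1 * (3 * C\<^sup>2) * D e 0"
      proof (rule approx0(2)[of e 0 L "cw L" 1 G "3 * C\<^sup>2" C])
        show "0 \<le> e" "0 \<le> (0::real)" "continuous_on {0..L} (cw L)" "continuous_on UNIV G" "G 0 = 0"
          "0 \<le> (1::real)" "0 \<le> 3 * C\<^sup>2" using e cw_cont cG G_simps by auto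
        show "\<bar>cw L x\<bar> \<le> 1" if "x \<in> {0..L}" for x using cw_bounds[of x L] that L by auto
        show "\<bar>G a - G b\<bar> \<le> 3 * C\<^sup>2 * \<bar>a - b\<bar>" if "\<bar>a\<bar> \<le> C" "\<bar>b\<bar> \<le> C" for a b
          by (rule G_lip[OF that])
        show "\<bar>u e x\<bar> \<le> C" "\<bar>u 0 x\<bar> \<le> C" if "x \<ge> 0" for x using Cb that e by auto
      qed
      have z: "(LINT x:{0..L}|lborel. cw L x * G (u 0 x)) = 0"
        unfolding set_lebesgue_integral_def
      proof (rule integral_eq_zero_AE)
        show "AE x in lborel. indicator {0..L} x *\<^sub>R (cw L x * G (u 0 x)) = 0"
          using uin_nn
        proof (rule AE_mp[OF _ AE_I2], intro impI)
          fix x :: real assume "x \<in> {0..} \<longrightarrow> 0 \<le> uin x"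
          then show "indicator {0..L} x *\<^sub>R (cw L x * G (u 0 x)) = 0"
            by (cases "x \<ge> 0") (auto simp: indicator_def init G_zero_iff)
        qed
      qed
      show ?thesis using ap z hk_leb(2)[OF cont] by simp
    qed
    show ?thesis
    proof (rule field_le_epsilon)
      fix d :: real assume d: "d > 0"
      have pos1: "0 < 3 * C\<^sup>2 + 1" by (simp add: add_nonneg_pos)
      have "0 < d / (3 * C\<^sup>2 + 1)" using d pos1 by simp
      then obtain e where e: "0 < e" "e \<le> s" "D e 0 < d / (3 * C\<^sup>2 + 1)"
        using near0[OF s] by blast
      have "3 * C\<^sup>2 * D e 0 \<le> (3 * C\<^sup>2 + 1) * D e 0" using D_nonneg[of e 0] by (simp add: mult_right_mono)
      also have "\<dots> \<le> (3 * C\<^sup>2 + 1) * (d / (3 * C\<^sup>2 + 1))" using e(3) by (intro mult_left_mono) auto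
      also have "\<dots> = d" using pos1 by simp
      finally have "3 * C\<^sup>2 * D e 0 \<le> d" .
      then show "integral {0..L} (\<lambda>x. cw L x * G (u s x)) \<le> s * N * B L + d"
        using A1[OF e(1,2)] A2[OF e(1,2)] by (simp add: mult.assoc)
    qed
  qed
  define R where "R = x + 1"
  have R: "R > 0" "x \<in> {0..R}" using x unfolding R_def by auto
  have cGs: "continuous_on {0..L} (\<lambda>x. G (u s x))" for L
    by (rule continuous_on_compose2[OF _ cont1[OF cu s], of UNIV])
       (auto intro: continuous_at_imp_continuous_on DERIV_isCont[OF G_deriv])
  define Z where "Z = integral {0..R} (\<lambda>x. G (u s x))"
  have Zle: "Z \<le> ((64/27) * s * N * 30 * C\<^sup>2 * N) / L" if L: "L \<ge> 2 * R" "L \<ge> 1" for L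
  proof -
    have L0: "L > 0" using L by auto
    have "Z \<le> integral {0..R} (\<lambda>x. (64/27) * (cw L x * G (u s x)))"
      unfolding Z_def
    proof (rule integral_le)
      show "(\<lambda>x. G (u s x)) integrable_on {0..R}" by (intro integrable_continuous_interval cGs)
      show "(\<lambda>x. (64/27) * (cw L x * G (u s x))) integrable_on {0..R}"
        by (intro integrable_continuous_interval continuous_intros cw_cont cGs)
      fix y assume y: "y \<in> {0..R}"
      have "27/64 \<le> cw L y" using cw_lower[of y R L] y L R by auto
      then have "(27/64) * G (u s y) \<le> cw L y * G (u s y)" using G_nonneg by (intro mult_right_mono) auto
      then show "G (u s y) \<le> (64/27) * (cw L y * G (u s y))" by simp
    qed
    also have "\<dots> = (64/27) * integral {0..R} (\<lambda>x. cw L x * G (u s x))" by simp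
    finally have I1: "Z \<le> (64/27) * integral {0..R} (\<lambda>x. cw L x * G (u s x))" .
    have int1: "(\<lambda>x. cw L x * G (u s x)) integrable_on {0..R}"
      by (intro integrable_continuous_interval continuous_intros cw_cont cGs)
    have int2: "(\<lambda>x. cw L x * G (u s x)) integrable_on {0..L}"
      by (intro integrable_continuous_interval continuous_intros cw_cont cGs)
    have sub: "{0..R} \<subseteq> {0..L}" using L R by auto
    have I2: "integral {0..R} (\<lambda>x. cw L x * G (u s x)) \<le> integral {0..L} (\<lambda>x. cw L x * G (u s x))"
    proof (rule integral_subset_le[OF sub int1 int2], intro ballI)
      fix y assume "y \<in> {0..L}"
      then have "0 \<le> cw L y" using cw_bounds(1)[of y L] L0 by auto
      then show "0 \<le> cw L y * G (u s y)" using G_nonneg(1) by simp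
    qed
    have I3: "integral {0..L} (\<lambda>x. cw L x * G (u s x)) \<le> s * N * B L" by (rule stepA[OF L0])
    have I4: "s * N * B L \<le> s * N * (30 / L * C\<^sup>2 * N)"
    proof -
      have LL: "L \<le> L\<^sup>2" using L by (simp add: power2_eq_square)
      have "30 / L\<^sup>2 \<le> 30 / L" by (rule divide_left_mono[OF LL]) (use L0 in auto)
      then have "B L \<le> 30 / L * C\<^sup>2 * N" unfolding B_def using N by (intro mult_right_mono) auto
      then show ?thesis using s N by (intro mult_left_mono) auto
    qed
    have "integral {0..R} (\<lambda>x. cw L x * G (u s x)) \<le> s * N * (30 / L * C\<^sup>2 * N)"
      using I2 I3 I4 by linarith
    from mult_left_mono[OF this, of "64/27"] I1
    have "Z \<le> (64/27) * (s * N * (30 / L * C\<^sup>2 * N))" by linarith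
    then show ?thesis by (simp add: field_simps)
  qed
  have Z0: "Z \<le> 0" by (rule le_inv_limit[OF Zle]) auto
  have "((\<lambda>x. G (u s x)) has_integral 0) {0..R}"
  proof -
    have "Z \<ge> 0" unfolding Z_def by (intro integral_nonneg integrable_continuous_interval cGs G_nonneg)
    then have "Z = 0" using Z0 by simp
    then show ?thesis unfolding Z_def using integrable_integral[OF integrable_continuous_interval[OF cGs[of R]]] by simp
  qed
  then have "G (u s x) = 0"
    using has_integral_0_cbox_imp_0[of 0 R "\<lambda>x. G (u s x)" x] cGs R G_nonneg by auto
  then show ?thesis by (simp add: G_zero_iff)
qed

end

context sol2 begin

lemma weak_id:
  fixes phi phi' phi'' :: "real \<Rightarrow> real"
  assumes ab: "0 < a" "a \<le> b" and L: "0 < L"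
   and pD: "\<And>x. (phi has_real_derivative phi' x) (at x)"
   and pD': "\<And>x. (phi' has_real_derivative phi'' x) (at x)"
   and pc: "continuous_on {0..L} phi''"
   and pL: "phi L = 0" "phi' L = 0" and p0: "phi 0 = 0"
  shows "(\<lambda>r. mass (u r) * integral {0..L} (\<lambda>x. phi'' x * u r x)) integrable_on {a..b}"
    and "integral {0..L} (\<lambda>x. phi x * u b x) - integral {0..L} (\<lambda>x. phi x * u a x) =
         integral {a..b} (\<lambda>r. mass (u r) * integral {0..L} (\<lambda>x. phi'' x * u r x))"
proof -
  have H: "\<And>v. ((\<lambda>v. v) has_real_derivative 1) (at v)" "\<And>v. ((\<lambda>_. 1) has_real_derivative 0) (at v)"
    by (auto intro!: derivative_eq_intros)
  have c0: "continuous_on UNIV (\<lambda>_::real. 0::real)" by simp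
  have H0: "(\<lambda>v::real. v) 0 = 0" by simp
  have p0': "phi 0 * (\<lambda>_. 1::real) 0 = 0" using p0 by simp
  note W = weak[OF ab L H(1) H(2) c0 H0 pD[THEN has_field_derivative_at_within] pD'[THEN has_field_derivative_at_within] pc pL p0']
  have e: "(\<lambda>x. phi'' x * u r x - phi x * 0 * (ux r x)\<^sup>2) = (\<lambda>x. phi'' x * u r x)" for r by simp
  show "(\<lambda>r. mass (u r) * integral {0..L} (\<lambda>x. phi'' x * u r x)) integrable_on {a..b}"
    using W(1) p0 unfolding e by simp
  show "integral {0..L} (\<lambda>x. phi x * u b x) - integral {0..L} (\<lambda>x. phi x * u a x) =
         integral {a..b} (\<lambda>r. mass (u r) * integral {0..L} (\<lambda>x. phi'' x * u r x))"
    using W(2) p0 unfolding e by simp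
qed

end

lemma phi2_lim:
  assumes "x \<ge> 0"
  shows "(\<lambda>n. indicator {0..real (Suc n)} x * (phi2 (real (Suc n)) x * c)) \<longlonglongrightarrow> x * c"
proof -
  have ev: "\<forall>\<^sub>F n in sequentially. x * cw (real (Suc n)) x * c = indicator {0..real (Suc n)} x * (phi2 (real (Suc n)) x * c)"
  proof (rule eventually_sequentiallyI[of "nat \<lceil>x\<rceil>"])
    fix n assume "nat \<lceil>x\<rceil> \<le> n"
    then have "x \<le> real (Suc n)" by linarith
    then show "x * cw (real (Suc n)) x * c = indicator {0..real (Suc n)} x * (phi2 (real (Suc n)) x * c)"
      using assms by (simp add: phi2_def indicator_def)
  qed
  have "(\<lambda>n. cw (real (Suc n)) x) \<longlonglongrightarrow> 1"
    using LIMSEQ_Suc[OF cw_lim[of x]] by simp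
  then have "(\<lambda>n. x * cw (real (Suc n)) x * c) \<longlonglongrightarrow> x * 1 * c" by (intro tendsto_intros)
  then show ?thesis using Lim_transform_eventually[OF _ ev] by simp
qed

lemma phi2_mono:
  assumes "x \<ge> 0" "c \<ge> 0"
  shows "mono (\<lambda>n. indicator {0..real (Suc n)} x * (phi2 (real (Suc n)) x * c))"
proof (rule incseq_SucI)
  fix n
  have L: "real (Suc n) > 0" by simp
  show "indicator {0..real (Suc n)} x * (phi2 (real (Suc n)) x * c)
      \<le> indicator {0..real (Suc (Suc n))} x * (phi2 (real (Suc (Suc n))) x * c)"
  proof (cases "x \<le> real (Suc n)")
    case True
    have "cw (real (Suc n)) x \<le> cw (real (Suc (Suc n))) x" by (rule cw_mono) (use True assms in auto)
    then show ?thesis using True assms unfolding phi2_def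
      by (auto simp: indicator_def intro!: mult_left_mono mult_right_mono)
  next
    case False
    show ?thesis
    proof (cases "x \<le> real (Suc (Suc n))")
      case True
      have "0 \<le> cw (real (Suc (Suc n))) x" by (rule cw_bounds(1)) (use True assms in auto)
      then show ?thesis using False True assms unfolding phi2_def by (auto simp: indicator_def)
    qed (use False in \<open>auto simp: indicator_def\<close>)
  qed
qed

context sol2 begin

lemma moment:
  assumes s: "0 < s" and nn: "\<And>x. x \<ge> 0 \<Longrightarrow> u s x \<ge> 0"
    and mom: "set_integrable lborel {0..} (\<lambda>x. x * uin x)"
  shows "set_integrable lborel {0..} (\<lambda>x. x * u s x)"
    and "(LINT x:{0..}|lborel. x * u s x) = (LINT x:{0..}|lborel. x * uin x)"
proof -
  obtain C N where C: "C \<ge> 0" and N: "N \<ge> 0" and Cb: "\<And>r x. r \<in> {0..s} \<Longrightarrow> x \<ge> 0 \<Longrightarrow> \<bar>u r x\<bar> \<le> C"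
    and Nb: "\<And>r. r \<in> {0..s} \<Longrightarrow> nrm r \<le> N" and Mb: "\<And>r. r \<in> {0..s} \<Longrightarrow> \<bar>mass (u r)\<bar> \<le> N"
    using bounds[of s] s by auto
  have mom0: "set_integrable lborel {0..} (\<lambda>x. x * u 0 x)"
    using mom by (subst set_integrable_cong[OF refl refl]) (auto simp: init)
  have momeq: "(LINT x:{0..}|lborel. x * u 0 x) = (LINT x:{0..}|lborel. x * uin x)"
    by (rule set_lebesgue_integral_cong) (auto simp: init)
  define J where "J L = integral {0..L} (\<lambda>x. phi2 L x * u s x)" for L
  define J0 where "J0 L = (LINT x:{0..L}|lborel. phi2 L x * u 0 x)" for L
  have cus: "continuous_on {0..L} (u s)" for L by (rule cont1[OF cu s])
  have stepA: "\<bar>J L - J0 L\<bar> \<le> s * N * (42 / L) * N" if L: "L > 0" for L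
  proof -
    have Lne: "L \<noteq> 0" using L by simp
    have A1: "\<bar>J L - integral {0..L} (\<lambda>x. phi2 L x * u e x)\<bar> \<le> s * N * (42 / L) * N"
      if e: "0 < e" "e \<le> s" for e
    proof -
      note W = weak_id[OF e L phi2_deriv(1) phi2_deriv(2) phi_cont(1) phi_at(1)[OF Lne] phi_at(2)[OF Lne] phi_at(5)]
      have "\<bar>integral {e..s} (\<lambda>r. mass (u r) * integral {0..L} (\<lambda>x. phi2'' L x * u r x))\<bar>
          \<le> integral {e..s} (\<lambda>r. N * (42 / L * N))"
        unfolding real_norm_def[symmetric]
      proof (rule Henstock_Kurzweil_Integration.integral_norm_bound_integral[OF W(1)])
        show "(\<lambda>r. N * (42 / L * N)) integrable_on {e..s}" by (rule integrable_const_ivl)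
        fix r assume r: "r \<in> {e..s}"
        have r0: "r > 0" using r e by auto
        have rs: "r \<in> {0..s}" using r e by auto
        have cur: "continuous_on {0..L} (u r)" by (rule cont1[OF cu r0])
        have "norm (integral {0..L} (\<lambda>x. phi2'' L x * u r x)) \<le> integral {0..L} (\<lambda>x. 42 / L * \<bar>u r x\<bar>)"
        proof (rule Henstock_Kurzweil_Integration.integral_norm_bound_integral)
          show "(\<lambda>x. phi2'' L x * u r x) integrable_on {0..L}"
            by (intro integrable_continuous_interval continuous_intros phi_cont cur)
          show "(\<lambda>x. 42 / L * \<bar>u r x\<bar>) integrable_on {0..L}"
            by (intro integrable_continuous_interval continuous_intros cur)
          fix x assume x: "x \<in> {0..L}"
          have "\<bar>phi2'' L x\<bar> \<le> 42 / L" using phi2_bound[of x L] x L by auto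
          then have "\<bar>phi2'' L x\<bar> * \<bar>u r x\<bar> \<le> 42 / L * \<bar>u r x\<bar>"
            by (rule mult_right_mono) simp
          then show "norm (phi2'' L x * u r x) \<le> 42 / L * \<bar>u r x\<bar>"
            by (simp add: abs_mult)
        qed
        then have "\<bar>integral {0..L} (\<lambda>x. phi2'' L x * u r x)\<bar> \<le> integral {0..L} (\<lambda>x. 42 / L * \<bar>u r x\<bar>)"
          by simp
        also have "\<dots> = 42 / L * integral {0..L} (\<lambda>x. \<bar>u r x\<bar>)" by simp
        also have "\<dots> \<le> 42 / L * N"
        proof (rule mult_left_mono)
          have "integral {0..L} (\<lambda>x. \<bar>u r x\<bar>) = (LINT x:{0..L}|lborel. \<bar>u r x\<bar>)"
            by (rule hk_leb(2)) (intro continuous_intros cur)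
          also have "\<dots> \<le> nrm r" unfolding nrm_def
            by (rule set_integral_sub_le) (auto intro: set_integrable_abs L1 r0[THEN less_imp_le])
          also have "\<dots> \<le> N" by (rule Nb[OF rs])
          finally show "integral {0..L} (\<lambda>x. \<bar>u r x\<bar>) \<le> N" .
        qed (use L in simp)
        finally have I: "\<bar>integral {0..L} (\<lambda>x. phi2'' L x * u r x)\<bar> \<le> 42 / L * N" .
        have "\<bar>mass (u r) * integral {0..L} (\<lambda>x. phi2'' L x * u r x)\<bar> \<le> N * (42 / L * N)"
          unfolding abs_mult using Mb[OF rs] I by (intro mult_mono) auto
        then show "norm (mass (u r) * integral {0..L} (\<lambda>x. phi2'' L x * u r x)) \<le> N * (42 / L * N)" by simp
      qed
      also have "\<dots> = (s - e) * (N * (42 / L * N))" using e by simp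
      also have "\<dots> \<le> s * (N * (42 / L * N))" using e N L by (intro mult_right_mono) auto
      finally show ?thesis unfolding J_def W(2)[symmetric] by (simp add: mult.assoc)
    qed
    have A2: "\<bar>integral {0..L} (\<lambda>x. phi2 L x * u e x) - J0 L\<bar> \<le> L * D e 0" if e: "0 < e" "e \<le> s" for e
    proof -
      have cont: "continuous_on {0..L} (\<lambda>x. phi2 L x * u e x)"
        unfolding phi2_def by (intro continuous_intros cw_cont cont1[OF cu e(1)])
      have ap: "\<bar>(LINT x:{0..L}|lborel. phi2 L x * u e x) - (LINT x:{0..L}|lborel. phi2 L x * u 0 x)\<bar> \<le> L * 1 * D e 0"
      proof (rule approx0(2)[of e 0 L "phi2 L" L "\<lambda>v. v" 1 C])
        show "0 \<le> e" "0 \<le> (0::real)" "continuous_on {0..L} (phi2 L)" "continuous_on UNIV (\<lambda>v::real. v)"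
          "(\<lambda>v::real. v) 0 = 0" "0 \<le> L" "0 \<le> (1::real)" using e L unfolding phi2_def
          by (auto intro!: continuous_intros cw_cont)
        show "\<bar>phi2 L x\<bar> \<le> L" if "x \<in> {0..L}" for x
        proof -
          have "\<bar>phi2 L x\<bar> = x * cw L x" unfolding phi2_def using that cw_bounds(1)[of x L] L by (auto simp: abs_mult)
          also have "\<dots> \<le> L * 1" using that cw_bounds(1,2)[of x L] L by (intro mult_mono) auto
          finally show ?thesis by simp
        qed
        show "\<bar>a - b\<bar> \<le> 1 * \<bar>a - b\<bar>" for a b :: real by simp
        show "\<bar>u e x\<bar> \<le> C" "\<bar>u 0 x\<bar> \<le> C" if "x \<ge> 0" for x using Cb that e by auto
      qed
      show ?thesis using ap hk_leb(2)[OF cont] unfolding J0_def by simp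
    qed
    show ?thesis
    proof (rule field_le_epsilon)
      fix d :: real assume d: "d > 0"
      have pos1: "0 < L + 1" using L by simp
      have "0 < d / (L + 1)" using d pos1 by simp
      then obtain e where e: "0 < e" "e \<le> s" "D e 0 < d / (L + 1)"
        using near0[OF s] by blast
      have "L * D e 0 \<le> (L + 1) * D e 0" using D_nonneg[of e 0] by (simp add: mult_right_mono)
      also have "\<dots> \<le> (L + 1) * (d / (L + 1))" using e(3) pos1 by (intro mult_left_mono) auto
      also have "\<dots> = d" using pos1 by simp
      finally have "L * D e 0 \<le> d" .
      then show "\<bar>J L - J0 L\<bar> \<le> s * N * (42 / L) * N + d"
        using A1[OF e(1,2)] A2[OF e(1,2)] by linarith
    qed
  qed
  define Ln where "Ln n = real (Suc n)" for n
  have Ln: "Ln n > 0" for n unfolding Ln_def by simp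
  have J0lim: "(\<lambda>n. J0 (Ln n)) \<longlonglongrightarrow> (LINT x:{0..}|lborel. x * u 0 x)"
    unfolding J0_def set_lebesgue_integral_def
  proof (rule integral_dominated_convergence[where w="\<lambda>x. indicator {0..} x *\<^sub>R \<bar>x * u 0 x\<bar>"])
    show "(\<lambda>x. indicator {0..} x *\<^sub>R (x * u 0 x)) \<in> borel_measurable lborel"
      using mom0 unfolding set_integrable_def by blast
    show "(\<lambda>x. indicat_real {0..Ln i} x *\<^sub>R (phi2 (Ln i) x * u 0 x)) \<in> borel_measurable lborel" for i
    proof -
      have "continuous_on {0..Ln i} (phi2 (Ln i))" unfolding phi2_def by (intro continuous_intros cw_cont)
      from meas_wHu[of 0 "Ln i" "phi2 (Ln i)" "\<lambda>v. v", OF _ this]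
      show ?thesis unfolding set_borel_measurable_def by simp
    qed
    show "integrable lborel (\<lambda>x. indicator {0..} x *\<^sub>R \<bar>x * u 0 x\<bar>)"
      using set_integrable_abs[OF mom0] unfolding set_integrable_def .
    show "AE x in lborel. (\<lambda>i. indicator {0..Ln i} x *\<^sub>R (phi2 (Ln i) x * u 0 x)) \<longlonglongrightarrow> indicator {0..} x *\<^sub>R (x * u 0 x)"
    proof (rule AE_I2)
      fix x :: real
      show "(\<lambda>i. indicator {0..Ln i} x *\<^sub>R (phi2 (Ln i) x * u 0 x)) \<longlonglongrightarrow> indicator {0..} x *\<^sub>R (x * u 0 x)"
      proof (cases "x \<ge> 0")
        case True
        then show ?thesis using phi2_lim[OF True, of "u 0 x"] unfolding Ln_def by (simp add: indicator_def)
      qed (simp add: indicator_def)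
    qed
    show "AE x in lborel. norm (indicator {0..Ln i} x *\<^sub>R (phi2 (Ln i) x * u 0 x)) \<le> indicator {0..} x *\<^sub>R \<bar>x * u 0 x\<bar>" for i
    proof (rule AE_I2)
      fix x :: real
      show "norm (indicator {0..Ln i} x *\<^sub>R (phi2 (Ln i) x * u 0 x)) \<le> indicator {0..} x *\<^sub>R \<bar>x * u 0 x\<bar>"
      proof (cases "x \<in> {0..Ln i}")
        case True
        have "\<bar>phi2 (Ln i) x * u 0 x\<bar> = x * cw (Ln i) x * \<bar>u 0 x\<bar>"
          unfolding phi2_def using True cw_bounds(1)[of x "Ln i"] Ln[of i] by (auto simp: abs_mult)
        also have "\<dots> \<le> x * 1 * \<bar>u 0 x\<bar>"
          using True cw_bounds(1,2)[of x "Ln i"] Ln[of i] by (intro mult_mono mult_left_mono) auto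
        finally show ?thesis using True by (simp add: indicator_def abs_mult)
      qed (auto simp: indicator_def)
    qed
  qed
  have diffl: "(\<lambda>n. J (Ln n) - J0 (Ln n)) \<longlonglongrightarrow> 0"
  proof (rule Lim_null_comparison)
    show "\<forall>\<^sub>F n in sequentially. norm (J (Ln n) - J0 (Ln n)) \<le> (s * N * 42 * N) / real (Suc n)"
      using stepA[OF Ln] unfolding Ln_def by (auto intro!: always_eventually simp: field_simps)
    show "(\<lambda>n. (s * N * 42 * N) / real (Suc n)) \<longlonglongrightarrow> 0"
      using LIMSEQ_Suc[OF lim_const_over_n[of "s * N * 42 * N"]] by simp
  qed
  have Jlim: "(\<lambda>n. J (Ln n)) \<longlonglongrightarrow> (LINT x:{0..}|lborel. x * u 0 x)"
    using tendsto_add[OF diffl J0lim] by simp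
  define f where "f n x = indicator {0..Ln n} x *\<^sub>R (phi2 (Ln n) x * u s x)" for n x
  have fint: "integrable lborel (f n)" and fJ: "integral\<^sup>L lborel (f n) = J (Ln n)" for n
  proof -
    have cont: "continuous_on {0..Ln n} (\<lambda>x. phi2 (Ln n) x * u s x)"
      unfolding phi2_def by (intro continuous_intros cw_cont cus)
    show "integrable lborel (f n)" using hk_leb(1)[OF cont] unfolding set_integrable_def f_def .
    show "integral\<^sup>L lborel (f n) = J (Ln n)" using hk_leb(2)[OF cont] unfolding J_def f_def set_lebesgue_integral_def by simp
  qed
  have main: "integrable lborel (\<lambda>x. indicator {0..} x *\<^sub>R (x * u s x))
     \<and> integral\<^sup>L lborel (\<lambda>x. indicator {0..} x *\<^sub>R (x * u s x)) = (LINT x:{0..}|lborel. x * u 0 x)"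
  proof (intro conjI)
    have mono: "AE x in lborel. mono (\<lambda>n. f n x)"
    proof (rule AE_I2)
      fix x :: real
      show "mono (\<lambda>n. f n x)"
      proof (cases "x \<ge> 0")
        case True
        then show ?thesis using phi2_mono[OF True nn[OF True]] unfolding f_def Ln_def by simp
      qed (simp add: f_def indicator_def mono_def)
    qed
    have lim: "AE x in lborel. (\<lambda>n. f n x) \<longlonglongrightarrow> indicator {0..} x *\<^sub>R (x * u s x)"
    proof (rule AE_I2)
      fix x :: real
      show "(\<lambda>n. f n x) \<longlonglongrightarrow> indicator {0..} x *\<^sub>R (x * u s x)"
      proof (cases "x \<ge> 0")
        case True
        then show ?thesis using phi2_lim[OF True, of "u s x"] unfolding f_def Ln_def by (simp add: indicator_def)
      qed (simp add: f_def indicator_def)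
    qed
    have meas: "(\<lambda>x. indicator {0..} x *\<^sub>R (x * u s x)) \<in> borel_measurable lborel"
    proof -
      have "(\<lambda>x. x * (indicator {0..} x *\<^sub>R u s x)) \<in> borel_measurable lborel"
        using meas_u[of s] s by (intro borel_measurable_times) auto
      then show ?thesis by (simp add: mult.left_commute)
    qed
    have ilim: "(\<lambda>n. integral\<^sup>L lborel (f n)) \<longlonglongrightarrow> (LINT x:{0..}|lborel. x * u 0 x)"
      unfolding fJ by (rule Jlim)
    show "integrable lborel (\<lambda>x. indicator {0..} x *\<^sub>R (x * u s x))"
      by (rule integrable_monotone_convergence[OF fint mono lim ilim meas])
    show "integral\<^sup>L lborel (\<lambda>x. indicator {0..} x *\<^sub>R (x * u s x)) = (LINT x:{0..}|lborel. x * u 0 x)"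
      by (rule integral_monotone_convergence[OF fint mono lim ilim meas])
  qed
  show "set_integrable lborel {0..} (\<lambda>x. x * u s x)" using main unfolding set_integrable_def by blast
  show "(LINT x:{0..}|lborel. x * u s x) = (LINT x:{0..}|lborel. x * uin x)"
    using main momeq unfolding set_lebesgue_integral_def by simp
qed

end

lemma refl_integral:
  fixes g :: "real \<Rightarrow> 'a :: {banach, second_countable_topology}"
  shows "(\<integral>x. g x \<partial>lborel) = (\<integral>x. g (- x) \<partial>lborel)"
  using lborel_integral_real_affine[of "-1" g 0] by simp

lemma refl_integrable:
  fixes g :: "real \<Rightarrow> 'a :: {banach, second_countable_topology}"
  shows "integrable lborel (\<lambda>x. g (- x)) \<longleftrightarrow> integrable lborel g"
  using lborel_integrable_real_affine_iff[of "-1" g 0] by simp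

lemma odd_char_zero:
  fixes F :: "real \<Rightarrow> real"
  assumes F: "integrable lborel F" and odd: "\<And>x. F (- x) = - F x"
    and sine: "\<And>k. (\<integral>x. F x * sin (k * x) \<partial>lborel) = 0"
  shows "(CLINT x|lborel. F x *\<^sub>R iexp (k * x)) = 0"
proof -
  have Fm[measurable]: "F \<in> borel_measurable lborel" using F by auto
  have ic: "integrable lborel (\<lambda>x. F x * cos (k * x))"
    by (rule Bochner_Integration.integrable_bound[OF F]) (auto simp: abs_mult intro!: mult_left_le)
  have isn: "integrable lborel (\<lambda>x. F x * sin (k * x))"
    by (rule Bochner_Integration.integrable_bound[OF F]) (auto simp: abs_mult intro!: mult_left_le)
  have cos0: "(\<integral>x. F x * cos (k * x) \<partial>lborel) = 0"
  proof -
    have "(\<integral>x. F x * cos (k * x) \<partial>lborel) = (\<integral>x. F (- x) * cos (k * (- x)) \<partial>lborel)"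
      by (rule refl_integral)
    also have "\<dots> = - (\<integral>x. F x * cos (k * x) \<partial>lborel)" by (simp add: odd)
    finally show ?thesis by simp
  qed
  have eq: "(\<lambda>x. F x *\<^sub>R iexp (k * x)) = (\<lambda>x. complex_of_real (F x * cos (k * x)) + \<i> * complex_of_real (F x * sin (k * x)))"
    by (rule ext) (simp add: scaleR_conv_of_real complex_eq_iff Re_exp Im_exp)
  have i1: "integrable lborel (\<lambda>x. complex_of_real (F x * cos (k * x)))" using ic by (rule integrable_of_real)
  have i2: "integrable lborel (\<lambda>x. \<i> * complex_of_real (F x * sin (k * x)))"
    using integrable_of_real[OF isn] by (rule integrable_mult_right)
  show ?thesis unfolding eq Bochner_Integration.integral_add[OF i1 i2] integral_mult_right_zero
    integral_complex_of_real using cos0 sine[of k] by simp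
qed

lemma sine_unique:
  fixes f :: "real \<Rightarrow> real"
  assumes f: "set_integrable lborel {0..} f" and z: "\<And>k. (LINT x:{0..}|lborel. sin (k * x) * f x) = 0"
  shows "AE x in lborel. x \<in> {0..} \<longrightarrow> f x = 0"
proof -
  define g where "g x = indicator {0<..} x * f x" for x
  have gi: "integrable lborel g"
  proof -
    have "{0<..} \<subseteq> {0::real..}" by auto
    from set_integrable_subset[OF f _ this] show ?thesis unfolding set_integrable_def g_def by auto
  qed
  have gm[measurable]: "g \<in> borel_measurable lborel" using gi by auto
  have gri: "integrable lborel (\<lambda>x. g (- x))" using gi by (simp add: refl_integrable)
  define F where "F x = g x - g (- x)" for x
  have Fi: "integrable lborel F" unfolding F_def using gi gri by auto
  have Fm[measurable]: "F \<in> borel_measurable lborel" using Fi by auto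
  have odd: "F (- x) = - F x" for x unfolding F_def by simp
  have sine: "(\<integral>x. F x * sin (k * x) \<partial>lborel) = 0" for k
  proof -
    have i1: "integrable lborel (\<lambda>x. g x * sin (k * x))"
      by (rule Bochner_Integration.integrable_bound[OF gi]) (auto simp: abs_mult intro!: mult_left_le)
    have i2: "integrable lborel (\<lambda>x. g (- x) * sin (k * x))"
      by (rule Bochner_Integration.integrable_bound[OF gri]) (auto simp: abs_mult intro!: mult_left_le)
    have "(\<integral>x. g (- x) * sin (k * x) \<partial>lborel) = (\<integral>x. g (- (- x)) * sin (k * (- x)) \<partial>lborel)"
      by (rule refl_integral)
    also have "\<dots> = - (\<integral>x. g x * sin (k * x) \<partial>lborel)" by simp
    finally have r: "(\<integral>x. g (- x) * sin (k * x) \<partial>lborel) = - (\<integral>x. g x * sin (k * x) \<partial>lborel)" .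
    have "(\<integral>x. g x * sin (k * x) \<partial>lborel) = (LINT x:{0..}|lborel. sin (k * x) * f x)"
      unfolding set_lebesgue_integral_def g_def
      by (intro Bochner_Integration.integral_cong) (auto simp: indicator_def)
    then have g0: "(\<integral>x. g x * sin (k * x) \<partial>lborel) = 0" using z by simp
    have "(\<integral>x. F x * sin (k * x) \<partial>lborel) = (\<integral>x. g x * sin (k * x) - g (- x) * sin (k * x) \<partial>lborel)"
      unfolding F_def by (simp add: left_diff_distrib)
    also have "\<dots> = 0" using Bochner_Integration.integral_diff[OF i1 i2] r g0 by simp
    finally show ?thesis .
  qed
  have Fint0: "(\<integral>x. F x \<partial>lborel) = 0"
  proof -
    have "(\<integral>x. F x \<partial>lborel) = (\<integral>x. F (- x) \<partial>lborel)" by (rule refl_integral)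
    also have "\<dots> = - (\<integral>x. F x \<partial>lborel)" by (simp add: odd)
    finally show ?thesis by simp
  qed
  define P where "P x = max 0 (F x)" for x
  define Q where "Q x = max 0 (- F x)" for x
  have Pm[measurable]: "P \<in> borel_measurable lborel" and Qm[measurable]: "Q \<in> borel_measurable lborel"
    unfolding P_def Q_def by measurable
  have Pi: "integrable lborel P" by (rule Bochner_Integration.integrable_bound[OF Fi Pm]) (auto simp: P_def)
  have Qi: "integrable lborel Q" by (rule Bochner_Integration.integrable_bound[OF Fi Qm]) (auto simp: Q_def)
  have PQ: "F x = P x - Q x" for x unfolding P_def Q_def by auto
  have Pnn: "P x \<ge> 0" and Qnn: "Q x \<ge> 0" for x unfolding P_def Q_def by auto
  have intPQ: "(\<integral>x. P x \<partial>lborel) = (\<integral>x. Q x \<partial>lborel)"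
    using Fint0 Bochner_Integration.integral_diff[OF Pi Qi] unfolding PQ by simp
  define c where "c = (\<integral>x. P x \<partial>lborel)"
  have c0: "c \<ge> 0" unfolding c_def using Pnn by simp
  have AEF: "AE x in lborel. F x = 0"
  proof (cases "c = 0")
    case True
    have "AE x in lborel. P x = 0"
      using True integral_nonneg_eq_0_iff_AE[OF Pi] Pnn unfolding c_def by auto
    moreover have "AE x in lborel. Q x = 0"
      using True intPQ integral_nonneg_eq_0_iff_AE[OF Qi] Qnn unfolding c_def by auto
    ultimately show ?thesis by eventually_elim (simp add: PQ)
  next
    case False
    then have c: "c > 0" using c0 by simp
    define M1 where "M1 = density lborel (\<lambda>x. P x / c)"
    define M2 where "M2 = density lborel (\<lambda>x. Q x / c)"
    have rd: "real_distribution (density lborel (\<lambda>x. R x / c))"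
      if Ri: "integrable lborel R" and Rm: "R \<in> borel_measurable lborel" and Rnn: "\<And>x. R x \<ge> 0"
        and Rc: "(\<integral>x. R x \<partial>lborel) = c" for R
    proof -
      have "emeasure (density lborel (\<lambda>x. R x / c)) UNIV = (\<integral>\<^sup>+ x. ennreal (R x / c) \<partial>lborel)"
        using Rm by (subst emeasure_density) auto
      also have "\<dots> = ennreal (\<integral>x. R x / c \<partial>lborel)"
        using Ri Rnn c by (intro nn_integral_eq_integral) auto
      also have "\<dots> = 1" using Rc c by simp
      finally have "emeasure (density lborel (\<lambda>x. R x / c)) UNIV = 1" .
      then have "prob_space (density lborel (\<lambda>x. R x / c))" by (intro prob_spaceI) simp
      then show ?thesis by (simp add: real_distribution_def real_distribution_axioms_def)
    qed
    have rd1: "real_distribution M1" unfolding M1_def by (rule rd[OF Pi Pm Pnn]) (simp add: c_def)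
    have rd2: "real_distribution M2" unfolding M2_def by (rule rd[OF Qi Qm Qnn]) (simp add: c_def intPQ)
    have chr: "char (density lborel (\<lambda>x. R x / c)) k = (1 / c) *\<^sub>R (CLINT x|lborel. R x *\<^sub>R iexp (k * x))"
      if Rm: "R \<in> borel_measurable lborel" and Rnn: "\<And>x. R x \<ge> 0" for R k
    proof -
      have "char (density lborel (\<lambda>x. R x / c)) k = (CLINT x|lborel. (R x / c) *\<^sub>R iexp (k * x))"
        unfolding char_def using Rm Rnn c by (subst integral_density) auto
      also have "\<dots> = (CLINT x|lborel. (1 / c) *\<^sub>R (R x *\<^sub>R iexp (k * x)))" by simp
      also have "\<dots> = (1 / c) *\<^sub>R (CLINT x|lborel. R x *\<^sub>R iexp (k * x))"
        by (rule integral_scaleR_right)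
      finally show ?thesis .
    qed
    have "char M1 = char M2"
    proof
      fix k
      have iP: "integrable lborel (\<lambda>x. P x *\<^sub>R iexp (k * x))"
        by (rule Bochner_Integration.integrable_bound[OF Pi]) (auto simp: norm_mult)
      have iQ: "integrable lborel (\<lambda>x. Q x *\<^sub>R iexp (k * x))"
        by (rule Bochner_Integration.integrable_bound[OF Qi]) (auto simp: norm_mult)
      have "(CLINT x|lborel. F x *\<^sub>R iexp (k * x)) = 0" by (rule odd_char_zero[OF Fi odd sine])
      then have "(CLINT x|lborel. P x *\<^sub>R iexp (k * x) - Q x *\<^sub>R iexp (k * x)) = 0"
        unfolding PQ by (simp add: scaleR_left_diff_distrib)
      then have "(CLINT x|lborel. P x *\<^sub>R iexp (k * x)) = (CLINT x|lborel. Q x *\<^sub>R iexp (k * x))"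
        using Bochner_Integration.integral_diff[OF iP iQ] by simp
      then show "char M1 k = char M2 k" unfolding M1_def M2_def using chr[OF Pm Pnn] chr[OF Qm Qnn] by simp
    qed
    then have M12: "M1 = M2" by (rule Levy_uniqueness[OF rd1 rd2])
    have zero_on: "AE x in lborel. x \<in> A \<longrightarrow> R x = 0"
      if Rm: "R \<in> borel_measurable lborel" and Rnn: "\<And>x. R x \<ge> 0" and A: "A \<in> sets borel"
        and e0: "emeasure (density lborel (\<lambda>x. R x / c)) A = 0" for R A
    proof -
      have "(\<integral>\<^sup>+ x. ennreal (R x / c) * indicator A x \<partial>lborel) = 0"
        using e0 Rm A by (subst (asm) emeasure_density) auto
      then have "AE x in lborel. ennreal (R x / c) * indicator A x = 0"
        using Rm A by (subst (asm) nn_integral_0_iff_AE) auto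
      then show ?thesis
      proof eventually_elim
        case (elim x)
        then show ?case using c Rnn[of x] by (auto simp: indicator_def ennreal_eq_0_iff divide_le_0_iff split: if_splits)
      qed
    qed
    have e_vanish: "emeasure (density lborel (\<lambda>x. R x / c)) A = 0"
      if Rm: "R \<in> borel_measurable lborel" and A: "A \<in> sets borel" and R0: "\<And>x. x \<in> A \<Longrightarrow> R x = 0" for R A
    proof -
      have "emeasure (density lborel (\<lambda>x. R x / c)) A = (\<integral>\<^sup>+ x. ennreal (R x / c) * indicator A x \<partial>lborel)"
        using Rm A by (subst emeasure_density) auto
      also have "(\<lambda>x. ennreal (R x / c) * indicator A x) = (\<lambda>x. 0)"
        using R0 by (intro ext) (auto simp: indicator_def)
      finally show ?thesis by simp
    qed
    have Fb: "F \<in> borel_measurable borel" using Fm by simp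
    have "{w \<in> space borel. 0 < F w} \<in> sets borel" using Fb borel_measurable_iff_greater by blast
    then have A1: "{x. F x > 0} \<in> sets borel" by simp
    have "{w \<in> space borel. F w < 0} \<in> sets borel" using Fb borel_measurable_iff_less by blast
    then have A2: "{x. F x < 0} \<in> sets borel" by simp
    have "emeasure M1 {x. F x > 0} = 0"
      unfolding M12 M2_def by (rule e_vanish[OF Qm A1]) (auto simp: Q_def)
    then have ae1: "AE x in lborel. x \<in> {x. F x > 0} \<longrightarrow> P x = 0"
      unfolding M1_def by (rule zero_on[OF Pm Pnn A1, rotated])
    have "emeasure M2 {x. F x < 0} = 0"
      unfolding M12[symmetric] M1_def by (rule e_vanish[OF Pm A2]) (auto simp: P_def)
    then have ae2: "AE x in lborel. x \<in> {x. F x < 0} \<longrightarrow> Q x = 0"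
      unfolding M2_def by (rule zero_on[OF Qm Qnn A2, rotated])
    show ?thesis using ae1 ae2 by eventually_elim (auto simp: P_def Q_def max_def split: if_splits)
  qed
  show ?thesis using AEF AE_lborel_singleton[of 0]
    by eventually_elim (auto simp: F_def g_def indicator_def)
qed

lemma phi3_lim:
  assumes "x \<ge> 0"
  shows "(\<lambda>n. indicator {0..real (Suc n)} x * (phi3 k (real (Suc n)) x * c)) \<longlonglongrightarrow> sin (k * x) * c"
proof -
  have ev: "\<forall>\<^sub>F n in sequentially. sin (k * x) * cw (real (Suc n)) x * c = indicator {0..real (Suc n)} x * (phi3 k (real (Suc n)) x * c)"
  proof (rule eventually_sequentiallyI[of "nat \<lceil>x\<rceil>"])
    fix n assume "nat \<lceil>x\<rceil> \<le> n"
    then have "x \<le> real (Suc n)" by linarith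
    then show "sin (k * x) * cw (real (Suc n)) x * c = indicator {0..real (Suc n)} x * (phi3 k (real (Suc n)) x * c)"
      using assms by (simp add: phi3_def indicator_def)
  qed
  have "(\<lambda>n. cw (real (Suc n)) x) \<longlonglongrightarrow> 1"
    using LIMSEQ_Suc[OF cw_lim[of x]] by simp
  then have "(\<lambda>n. sin (k * x) * cw (real (Suc n)) x * c) \<longlonglongrightarrow> sin (k * x) * 1 * c" by (intro tendsto_intros)
  then show ?thesis using Lim_transform_eventually[OF _ ev] by simp
qed

lemma phi3_abs: "0 \<le> x \<Longrightarrow> x \<le> L \<Longrightarrow> 0 < L \<Longrightarrow> \<bar>phi3 k L x\<bar> \<le> 1"
  unfolding phi3_def using cw_bounds(1,2)[of x L] by (auto simp: abs_mult intro: mult_le_one)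

context sol2 begin

definition gk :: "real \<Rightarrow> real \<Rightarrow> real" where "gk k s = (LINT x:{0..}|lborel. sin (k * x) * u s x)"

lemma sin_int: assumes "s \<ge> 0" shows "set_integrable lborel {0..} (\<lambda>x. sin (k * x) * u s x)"
proof (rule set_integrable_bound[OF L1[OF assms]])
  have "(\<lambda>x. indicator {0..} x *\<^sub>R (sin (k * x) * u s x)) = (\<lambda>x. sin (k * x) * (indicator {0..} x *\<^sub>R u s x))"
    by (rule ext) (simp add: mult.left_commute)
  moreover have "(\<lambda>x. sin (k * x) * (indicator {0..} x *\<^sub>R u s x)) \<in> borel_measurable lborel"
    using meas_u[OF assms] by (intro borel_measurable_times) (auto intro: borel_measurable_continuous_onI continuous_intros)
  ultimately show "set_borel_measurable lborel {0..} (\<lambda>x. sin (k * x) * u s x)"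
    unfolding set_borel_measurable_def by simp
  show "AE x in lborel. x \<in> {0..} \<longrightarrow> norm (sin (k * x) * u s x) \<le> norm (u s x)"
    by (rule AE_I2) (auto simp: abs_mult intro: mult_left_le_one_le)
qed

lemma gk_diff: assumes "r \<ge> 0" "s \<ge> 0" shows "\<bar>gk k r - gk k s\<bar> \<le> D r s"
proof -
  have "gk k r - gk k s = (LINT x:{0..}|lborel. sin (k * x) * u r x - sin (k * x) * u s x)"
    unfolding gk_def using set_integral_diff(2)[OF sin_int sin_int] assms by simp
  also have "\<bar>\<dots>\<bar> \<le> (LINT x:{0..}|lborel. \<bar>sin (k * x) * u r x - sin (k * x) * u s x\<bar>)"
    using set_integral_norm_bound[OF set_integral_diff(1)[OF sin_int sin_int]] assms by simp
  also have "\<dots> \<le> D r s" unfolding D_def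
  proof (rule set_integral_mono)
    show "set_integrable lborel {0..} (\<lambda>x. \<bar>sin (k * x) * u r x - sin (k * x) * u s x\<bar>)"
      by (intro set_integrable_abs set_integral_diff(1) sin_int assms)
    show "set_integrable lborel {0..} (\<lambda>x. \<bar>u r x - u s x\<bar>)"
      by (intro set_integrable_abs set_integral_diff(1) L1 assms)
    fix x
    have "\<bar>sin (k * x) * u r x - sin (k * x) * u s x\<bar> = \<bar>sin (k * x)\<bar> * \<bar>u r x - u s x\<bar>"
      by (simp add: abs_mult right_diff_distrib[symmetric])
    also have "\<dots> \<le> 1 * \<bar>u r x - u s x\<bar>" by (intro mult_right_mono) auto
    finally show "\<bar>sin (k * x) * u r x - sin (k * x) * u s x\<bar> \<le> \<bar>u r x - u s x\<bar>" by simp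
  qed
  finally show ?thesis .
qed

lemma gk_cont: "continuous_on {0..} (gk k)"
  by (rule cont_by_D) (rule gk_diff)

lemma gk_le: "s \<ge> 0 \<Longrightarrow> \<bar>gk k s\<bar> \<le> nrm s"
proof -
  assume s: "s \<ge> 0"
  have "\<bar>gk k s\<bar> \<le> (LINT x:{0..}|lborel. \<bar>sin (k * x) * u s x\<bar>)"
    unfolding gk_def using set_integral_norm_bound[OF sin_int[OF s]] by simp
  also have "\<dots> \<le> nrm s" unfolding nrm_def
    by (intro set_integral_mono set_integrable_abs sin_int L1 s) (auto simp: abs_mult intro: mult_left_le_one_le)
  finally show ?thesis .
qed

lemma S_lim:
  assumes q: "q > 0"
  shows "(\<lambda>n. integral {0..real (Suc n)} (\<lambda>x. phi3 k (real (Suc n)) x * u q x)) \<longlonglongrightarrow> gk k q"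
proof -
  have cont: "continuous_on {0..L} (\<lambda>x. phi3 k L x * u q x)" for L
    unfolding phi3_def by (intro continuous_intros cw_cont cont1[OF cu q])
  have eq: "integral {0..real (Suc n)} (\<lambda>x. phi3 k (real (Suc n)) x * u q x)
      = (\<integral>x. indicator {0..real (Suc n)} x *\<^sub>R (phi3 k (real (Suc n)) x * u q x) \<partial>lborel)" for n
    using hk_leb(2)[OF cont] unfolding set_lebesgue_integral_def by simp
  have "(\<lambda>n. (\<integral>x. indicator {0..real (Suc n)} x *\<^sub>R (phi3 k (real (Suc n)) x * u q x) \<partial>lborel))
      \<longlonglongrightarrow> (\<integral>x. indicator {0..} x *\<^sub>R (sin (k * x) * u q x) \<partial>lborel)"
  proof (rule integral_dominated_convergence[where w="\<lambda>x. indicator {0..} x *\<^sub>R \<bar>u q x\<bar>"])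
    show "(\<lambda>x. indicator {0..} x *\<^sub>R (sin (k * x) * u q x)) \<in> borel_measurable lborel"
      using sin_int[of q k] q unfolding set_integrable_def by auto
    show "(\<lambda>x. indicator {0..real (Suc i)} x *\<^sub>R (phi3 k (real (Suc i)) x * u q x)) \<in> borel_measurable lborel" for i
      using hk_leb(1)[OF cont] unfolding set_integrable_def by auto
    show "integrable lborel (\<lambda>x. indicator {0..} x *\<^sub>R \<bar>u q x\<bar>)"
      using set_integrable_abs[OF L1[of q]] q unfolding set_integrable_def by auto
    show "AE x in lborel. (\<lambda>i. indicator {0..real (Suc i)} x *\<^sub>R (phi3 k (real (Suc i)) x * u q x))
        \<longlonglongrightarrow> indicator {0..} x *\<^sub>R (sin (k * x) * u q x)"
    proof (rule AE_I2)
      fix x :: real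
      show "(\<lambda>i. indicator {0..real (Suc i)} x *\<^sub>R (phi3 k (real (Suc i)) x * u q x))
        \<longlonglongrightarrow> indicator {0..} x *\<^sub>R (sin (k * x) * u q x)"
      proof (cases "x \<ge> 0")
        case True
        then show ?thesis using phi3_lim[OF True, of k "u q x"] by (simp add: indicator_def)
      qed (simp add: indicator_def)
    qed
    show "AE x in lborel. norm (indicator {0..real (Suc i)} x *\<^sub>R (phi3 k (real (Suc i)) x * u q x))
        \<le> indicator {0..} x *\<^sub>R \<bar>u q x\<bar>" for i
    proof (rule AE_I2)
      fix x :: real
      show "norm (indicator {0..real (Suc i)} x *\<^sub>R (phi3 k (real (Suc i)) x * u q x)) \<le> indicator {0..} x *\<^sub>R \<bar>u q x\<bar>"
      proof (cases "x \<in> {0..real (Suc i)}")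
        case True
        have "\<bar>phi3 k (real (Suc i)) x\<bar> * \<bar>u q x\<bar> \<le> 1 * \<bar>u q x\<bar>"
          using phi3_abs[of x "real (Suc i)" k] True by (intro mult_right_mono) auto
        then show ?thesis using True by (simp add: indicator_def abs_mult)
      qed (auto simp: indicator_def)
    qed
  qed
  then show ?thesis unfolding eq gk_def set_lebesgue_integral_def .
qed

lemma int_abs_le_nrm: assumes r: "r > 0" shows "integral {0..L} (\<lambda>x. \<bar>u r x\<bar>) \<le> nrm r"
proof -
  have cur: "continuous_on {0..L} (u r)" by (rule cont1[OF cu r])
  have "integral {0..L} (\<lambda>x. \<bar>u r x\<bar>) = (LINT x:{0..L}|lborel. \<bar>u r x\<bar>)"
    by (rule hk_leb(2)) (intro continuous_intros cur)
  also have "\<dots> \<le> nrm r" unfolding nrm_def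
    by (rule set_integral_sub_le) (auto intro: set_integrable_abs L1 r[THEN less_imp_le])
  finally show ?thesis .
qed

lemma int_bound:
  assumes r: "r > 0" and w: "continuous_on {0..L} w" and wb: "\<And>x. x \<in> {0..L} \<Longrightarrow> \<bar>w x\<bar> \<le> \<beta>"
    and beta: "\<beta> \<ge> 0"
  shows "\<bar>integral {0..L} (\<lambda>x. w x * u r x)\<bar> \<le> \<beta> * nrm r"
proof -
  have cur: "continuous_on {0..L} (u r)" by (rule cont1[OF cu r])
  have "norm (integral {0..L} (\<lambda>x. w x * u r x)) \<le> integral {0..L} (\<lambda>x. \<beta> * \<bar>u r x\<bar>)"
  proof (rule Henstock_Kurzweil_Integration.integral_norm_bound_integral)
    show "(\<lambda>x. w x * u r x) integrable_on {0..L}"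
      by (intro integrable_continuous_interval continuous_intros w cur)
    show "(\<lambda>x. \<beta> * \<bar>u r x\<bar>) integrable_on {0..L}"
      by (intro integrable_continuous_interval continuous_intros cur)
    fix x assume x: "x \<in> {0..L}"
    have "\<bar>w x\<bar> * \<bar>u r x\<bar> \<le> \<beta> * \<bar>u r x\<bar>" by (rule mult_right_mono[OF wb[OF x]]) simp
    then show "norm (w x * u r x) \<le> \<beta> * \<bar>u r x\<bar>" by (simp add: abs_mult)
  qed
  also have "\<dots> = \<beta> * integral {0..L} (\<lambda>x. \<bar>u r x\<bar>)" by simp
  also have "\<dots> \<le> \<beta> * nrm r" by (rule mult_left_mono[OF int_abs_le_nrm[OF r] beta])
  finally show ?thesis by simp
qed

lemma gk_ident:
  assumes a: "0 < a" and ab: "a \<le> b"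
  shows "gk k b - gk k a = integral {a..b} (\<lambda>r. mass (u r) * (- k\<^sup>2 * gk k r))"
proof -
  obtain C N where C: "C \<ge> 0" and N: "N \<ge> 0" and Cb: "\<And>r x. r \<in> {0..b} \<Longrightarrow> x \<ge> 0 \<Longrightarrow> \<bar>u r x\<bar> \<le> C"
    and Nb: "\<And>r. r \<in> {0..b} \<Longrightarrow> nrm r \<le> N" and Mb: "\<And>r. r \<in> {0..b} \<Longrightarrow> \<bar>mass (u r)\<bar> \<le> N"
    using bounds[of b] a ab by auto
  define Ln where "Ln n = real (Suc n)" for n
  have Ln: "Ln n > 0" "Ln n \<ge> 1" "Ln n \<noteq> 0" for n unfolding Ln_def by auto
  define V where "V n r = integral {0..Ln n} (\<lambda>x. phi3'' k (Ln n) x * u r x)" for n r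
  define S where "S n q = integral {0..Ln n} (\<lambda>x. phi3 k (Ln n) x * u q x)" for n q
  have W: "(\<lambda>r. mass (u r) * V n r) integrable_on {a..b}" "S n b - S n a = integral {a..b} (\<lambda>r. mass (u r) * V n r)" for n
    using weak_id[OF a ab Ln(1)[of n] phi3_deriv(1)[of k "Ln n"] phi3_deriv(2)[of k "Ln n"] phi_cont(2)
        phi_at(3)[OF Ln(3)] phi_at(4)[OF Ln(3)] phi_at(6)] unfolding V_def S_def by auto
  define K where "K = k\<^sup>2 + 12 * \<bar>k\<bar> + 30"
  have K0: "K \<ge> 0" unfolding K_def by simp
  have Vb: "\<bar>V n r\<bar> \<le> K * N" if r: "r \<in> {a..b}" for n r
  proof -
    have r0: "r > 0" and rb: "r \<in> {0..b}" using r a by auto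
    have "\<bar>V n r\<bar> \<le> K * nrm r" unfolding V_def
    proof (rule int_bound[OF r0 phi_cont(2) _ K0])
      fix x assume x: "x \<in> {0..Ln n}"
      have b1: "\<bar>phi3'' k (Ln n) x + k\<^sup>2 * sin (k * x) * cw (Ln n) x\<bar> \<le> 12 * \<bar>k\<bar> / Ln n + 30 / (Ln n)\<^sup>2"
        using phi3_bound[of x "Ln n" k] x Ln[of n] by auto
      have "12 * \<bar>k\<bar> / Ln n \<le> 12 * \<bar>k\<bar>" using Ln[of n] by (simp add: divide_le_eq mult_le_cancel_left1)
      moreover have "30 / (Ln n)\<^sup>2 \<le> 30" using Ln[of n] by (simp add: divide_le_eq one_le_power)
      moreover have "\<bar>k\<^sup>2 * sin (k * x) * cw (Ln n) x\<bar> \<le> k\<^sup>2"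
      proof -
        have c: "0 \<le> cw (Ln n) x" "cw (Ln n) x \<le> 1" using cw_bounds(1,2)[of x "Ln n"] x Ln[of n] by auto
        have "\<bar>sin (k * x)\<bar> * cw (Ln n) x \<le> 1 * 1" using c by (intro mult_mono) auto
        then have "k\<^sup>2 * (\<bar>sin (k * x)\<bar> * cw (Ln n) x) \<le> k\<^sup>2 * 1" by (intro mult_left_mono) auto
        then show ?thesis using c by (simp add: abs_mult mult.assoc)
      qed
      ultimately show "\<bar>phi3'' k (Ln n) x\<bar> \<le> K" unfolding K_def using b1 by linarith
    qed
    also have "\<dots> \<le> K * N" by (rule mult_left_mono[OF Nb[OF rb] K0])
    finally show ?thesis .
  qed
  have Vlim: "(\<lambda>n. V n r) \<longlonglongrightarrow> - k\<^sup>2 * gk k r" if r: "r \<in> {a..b}" for r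
  proof -
    have r0: "r > 0" using r a by auto
    define E where "E n = V n r - (- k\<^sup>2 * S n r)" for n
    have "(\<lambda>n. E n) \<longlonglongrightarrow> 0"
    proof (rule Lim_null_comparison)
      show "\<forall>\<^sub>F n in sequentially. norm (E n) \<le> (12 * \<bar>k\<bar> + 30) * nrm r / real (Suc n)"
      proof (rule always_eventually, intro allI)
        fix n
        have "E n = integral {0..Ln n} (\<lambda>x. (phi3'' k (Ln n) x + k\<^sup>2 * phi3 k (Ln n) x) * u r x)"
        proof -
          have i1: "(\<lambda>x. phi3'' k (Ln n) x * u r x) integrable_on {0..Ln n}"
            by (intro integrable_continuous_interval continuous_intros phi_cont cont1[OF cu r0])
          have i2: "(\<lambda>x. k\<^sup>2 * (phi3 k (Ln n) x * u r x)) integrable_on {0..Ln n}"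
            unfolding phi3_def by (intro integrable_continuous_interval continuous_intros cw_cont cont1[OF cu r0])
          have "integral {0..Ln n} (\<lambda>x. (phi3'' k (Ln n) x + k\<^sup>2 * phi3 k (Ln n) x) * u r x)
              = integral {0..Ln n} (\<lambda>x. phi3'' k (Ln n) x * u r x + k\<^sup>2 * (phi3 k (Ln n) x * u r x))"
            by (rule integral_cong) (simp add: algebra_simps)
          also have "\<dots> = V n r + k\<^sup>2 * S n r"
            unfolding integral_add[OF i1 i2] V_def S_def by simp
          finally show ?thesis unfolding E_def by simp
        qed
        also have "\<bar>\<dots>\<bar> \<le> (12 * \<bar>k\<bar> / Ln n + 30 / (Ln n)\<^sup>2) * nrm r"
        proof (rule int_bound[OF r0])
          show "continuous_on {0..Ln n} (\<lambda>x. phi3'' k (Ln n) x + k\<^sup>2 * phi3 k (Ln n) x)"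
            unfolding phi3_def by (intro continuous_intros phi_cont cw_cont)
          show "\<bar>phi3'' k (Ln n) x + k\<^sup>2 * phi3 k (Ln n) x\<bar> \<le> 12 * \<bar>k\<bar> / Ln n + 30 / (Ln n)\<^sup>2" if "x \<in> {0..Ln n}" for x
            using phi3_bound[of x "Ln n" k] that Ln[of n] unfolding phi3_def by (auto simp: mult.assoc)
          show "0 \<le> 12 * \<bar>k\<bar> / Ln n + 30 / (Ln n)\<^sup>2" using Ln[of n] by simp
        qed
        also have "\<dots> \<le> (12 * \<bar>k\<bar> + 30) / Ln n * nrm r"
        proof (rule mult_right_mono)
          have "30 / (Ln n)\<^sup>2 \<le> 30 / Ln n"
            using Ln[of n] by (intro divide_left_mono) (auto simp: power2_eq_square)
          then show "12 * \<bar>k\<bar> / Ln n + 30 / (Ln n)\<^sup>2 \<le> (12 * \<bar>k\<bar> + 30) / Ln n" by (simp add: add_divide_distrib)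
          show "0 \<le> nrm r" using mass_le[of r] r0 by (auto intro: order.trans[OF abs_ge_zero])
        qed
        finally show "norm (E n) \<le> (12 * \<bar>k\<bar> + 30) * nrm r / real (Suc n)" unfolding Ln_def by simp
      qed
      show "(\<lambda>n. (12 * \<bar>k\<bar> + 30) * nrm r / real (Suc n)) \<longlonglongrightarrow> 0"
        using LIMSEQ_Suc[OF lim_const_over_n[of "(12 * \<bar>k\<bar> + 30) * nrm r"]] by simp
    qed
    moreover have "(\<lambda>n. - k\<^sup>2 * S n r) \<longlonglongrightarrow> - k\<^sup>2 * gk k r"
      unfolding S_def Ln_def by (intro tendsto_intros S_lim r0)
    ultimately have "(\<lambda>n. E n + (- k\<^sup>2 * S n r)) \<longlonglongrightarrow> 0 + (- k\<^sup>2 * gk k r)" by (rule tendsto_add)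
    then show ?thesis unfolding E_def by simp
  qed
  have DC: "(\<lambda>n. integral {a..b} (\<lambda>r. mass (u r) * V n r)) \<longlonglongrightarrow> integral {a..b} (\<lambda>r. mass (u r) * (- k\<^sup>2 * gk k r))"
  proof (rule Equivalence_Lebesgue_Henstock_Integration.dominated_convergence(2)[where h="\<lambda>_. N * (K * N)"])
    show "(\<lambda>r. mass (u r) * V n r) integrable_on {a..b}" for n by (rule W(1))
    show "(\<lambda>_. N * (K * N)) integrable_on {a..b}" by (rule integrable_const_ivl)
    show "norm (mass (u r) * V n r) \<le> N * (K * N)" if "r \<in> {a..b}" for n r
    proof -
      have rb: "r \<in> {0..b}" using that a by auto
      show ?thesis unfolding real_norm_def abs_mult using Mb[OF rb] Vb[OF that] by (intro mult_mono) auto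
    qed
    show "(\<lambda>n. mass (u r) * V n r) \<longlonglongrightarrow> mass (u r) * (- k\<^sup>2 * gk k r)" if "r \<in> {a..b}" for r
      by (intro tendsto_intros Vlim that)
  qed
  have "(\<lambda>n. S n b - S n a) \<longlonglongrightarrow> gk k b - gk k a"
    unfolding S_def Ln_def using a ab by (intro tendsto_intros S_lim) auto
  moreover have "(\<lambda>n. S n b - S n a) \<longlonglongrightarrow> integral {a..b} (\<lambda>r. mass (u r) * (- k\<^sup>2 * gk k r))"
    unfolding W(2) by (rule DC)
  ultimately show ?thesis by (rule LIMSEQ_unique)
qed

lemma gk_zero:
  assumes Z: "AE x in lborel. x \<in> {0..} \<longrightarrow> uin x = 0" and t: "t > 0"
  shows "gk k t = 0"
proof -
  define m where "m r = mass (u r)" for r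
  define h where "h r = m r * gk k r" for r
  have mc: "continuous_on {0..t} m" unfolding m_def by (rule continuous_on_subset[OF cont_mass]) auto
  have gc: "continuous_on {0..t} (gk k)" by (rule continuous_on_subset[OF gk_cont]) auto
  have hc: "continuous_on {0..t} h" unfolding h_def by (intro continuous_intros mc gc)
  have hint: "h integrable_on {0..b}" if "b \<le> t" for b
    by (rule integrable_continuous_interval) (rule continuous_on_subset[OF hc], use that in auto)
  have g0: "gk k 0 = 0"
  proof -
    have "AE x in lborel. indicator {0..} x *\<^sub>R (sin (k * x) * u 0 x) = 0"
      using Z by eventually_elim (auto simp: indicator_def init)
    then show ?thesis unfolding gk_def set_lebesgue_integral_def by (rule integral_eq_zero_AE)
  qed
  define I where "I b = integral {0..b} h" for b
  have key: "gk k b = - k\<^sup>2 * I b" if b: "b \<in> {0..t}" for b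
  proof (cases "b = 0")
    case True
    then show ?thesis using g0 unfolding I_def by simp
  next
    case False
    then have b0: "b > 0" using b by auto
    define a where "a n = b / real (Suc (Suc n))" for n
    have a: "0 < a n" "a n \<le> b" for n
      unfolding a_def using b0 by (auto simp: divide_le_eq)
    have alim: "a \<longlonglongrightarrow> 0"
    proof -
      have "(\<lambda>n. b / real (Suc n)) \<longlonglongrightarrow> 0" using LIMSEQ_Suc[OF lim_const_over_n[of b]] by simp
      then show ?thesis unfolding a_def using LIMSEQ_Suc by blast
    qed
    have eq: "gk k b - gk k (a n) = - k\<^sup>2 * integral {a n..b} h" for n
    proof -
      have "integral {a n..b} (\<lambda>r. mass (u r) * (- k\<^sup>2 * gk k r)) = integral {a n..b} (\<lambda>r. - k\<^sup>2 * h r)"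
        unfolding h_def m_def by (rule integral_cong) (simp add: algebra_simps)
      also have "\<dots> = - k\<^sup>2 * integral {a n..b} h" by simp
      finally show ?thesis using gk_ident[OF a(1)[of n] a(2)[of n], of k] by simp
    qed
    have l1: "(\<lambda>n. gk k (a n)) \<longlonglongrightarrow> gk k 0"
      by (rule continuous_on_tendsto_compose[OF gk_cont alim]) (use a in \<open>auto intro!: always_eventually less_imp_le\<close>)
    have l2: "(\<lambda>n. integral {a n..b} h) \<longlonglongrightarrow> integral {0..b} h"
      by (rule continuous_on_tendsto_compose[OF indefinite_integral_continuous_1'[OF hint[of b]] alim])
         (use a b0 b in \<open>auto intro!: always_eventually less_imp_le\<close>)
    have "(\<lambda>n. gk k b - gk k (a n)) \<longlonglongrightarrow> gk k b - gk k 0" by (intro tendsto_intros l1)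
    moreover have "(\<lambda>n. gk k b - gk k (a n)) \<longlonglongrightarrow> - k\<^sup>2 * integral {0..b} h"
      unfolding eq by (intro tendsto_intros l2)
    ultimately have "gk k b - gk k 0 = - k\<^sup>2 * integral {0..b} h" by (rule LIMSEQ_unique)
    then show ?thesis using g0 unfolding I_def by simp
  qed
  define tau where "tau s = integral {0..s} m" for s
  define P where "P s = I s * exp (k\<^sup>2 * tau s)" for s
  have "(P has_derivative (\<lambda>_. 0)) (at s within {0..t})" if s: "s \<in> {0..t}" for s
  proof -
    have dI: "(I has_real_derivative h s) (at s within {0..t})"
      unfolding I_def by (rule integral_has_real_derivative[OF hc s])
    have dt: "(tau has_real_derivative m s) (at s within {0..t})"
      unfolding tau_def by (rule integral_has_real_derivative[OF mc s])
    have "(P has_real_derivative (h s * exp (k\<^sup>2 * tau s) + I s * (exp (k\<^sup>2 * tau s) * (k\<^sup>2 * m s)))) (at s within {0..t})"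
      unfolding P_def by (auto intro!: derivative_eq_intros dI dt)
    moreover have "h s * exp (k\<^sup>2 * tau s) + I s * (exp (k\<^sup>2 * tau s) * (k\<^sup>2 * m s)) = 0"
      unfolding h_def key[OF s] by (simp add: algebra_simps)
    ultimately have "(P has_real_derivative 0) (at s within {0..t})" by simp
    then have "(P has_derivative (*) 0) (at s within {0..t})" by (simp add: has_field_derivative_def)
    moreover have "((*) (0::real)) = (\<lambda>_. 0)" by (rule ext) simp
    ultimately show ?thesis by simp
  qed
  then obtain c where c: "\<And>x. x \<in> {0..t} \<Longrightarrow> P x = c"
    using has_derivative_zero_constant[of "{0..t}" P] by auto
  have "P t = P 0" using c t by simp
  also have "P 0 = 0" unfolding P_def I_def by simp
  finally have "I t = 0" unfolding P_def by simp
  then show ?thesis using key[of t] t by simp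
qed

lemma zero_case':
  assumes Z: "AE x in lborel. x \<in> {0..} \<longrightarrow> uin x = 0" and t: "t > 0"
  shows "AE x in lborel. x \<in> {0..} \<longrightarrow> u t x = 0"
proof (rule sine_unique)
  show "set_integrable lborel {0..} (u t)" using L1 t by simp
  show "(LINT x:{0..}|lborel. sin (k * x) * u t x) = 0" for k
    using gk_zero[OF Z t, of k] unfolding gk_def .
qed

end

context sol2 begin

lemma ae_zero_of_int:
  fixes f :: "real \<Rightarrow> real"
  assumes "set_integrable lborel {0..} f" "AE x in lborel. x \<in> {0..} \<longrightarrow> f x \<ge> 0"
    "(LINT x:{0..}|lborel. f x) = 0"
  shows "AE x in lborel. x \<in> {0..} \<longrightarrow> f x = 0"
proof -
  have "AE x in lborel. indicator {0..} x *\<^sub>R f x = 0"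
  proof (subst integral_nonneg_eq_0_iff_AE[symmetric])
    show "integrable lborel (\<lambda>x. indicator {0..} x *\<^sub>R f x)" using assms(1) unfolding set_integrable_def .
    show "AE x in lborel. 0 \<le> indicator {0..} x *\<^sub>R f x"
      using assms(2) by eventually_elim (auto simp: indicator_def)
    show "integral\<^sup>L lborel (\<lambda>x. indicator {0..} x *\<^sub>R f x) = 0"
      using assms(3) unfolding set_lebesgue_integral_def .
  qed
  then show ?thesis by eventually_elim (auto simp: indicator_def split: if_splits)
qed

lemma mass_nonneg_all:
  assumes t: "t > 0"
    and nonneg: "AE x in lborel. x \<in> {0..} \<longrightarrow> uin x \<ge> 0"
    and mom: "set_integrable lborel {0..} (\<lambda>x. x * uin x)"
    and notZ: "\<not> (AE x in lborel. x \<in> {0..} \<longrightarrow> uin x = 0)"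
  shows "\<And>r. r \<in> {0..t} \<Longrightarrow> mass (u r) \<ge> 0"
proof (rule ccontr)
  fix r1 assume r1: "r1 \<in> {0..t}" and neg: "\<not> mass (u r1) \<ge> 0"
  define m where "m r = mass (u r)" for r
  have mc: "continuous_on {0..r1} m" unfolding m_def by (rule continuous_on_subset[OF cont_mass]) auto
  have uin_int: "set_integrable lborel {0..} uin"
    using L1[of 0] by (subst set_integrable_cong[OF refl refl]) (auto simp: init)
  have m0: "m 0 > 0"
  proof -
    have m0eq: "m 0 = (LINT x:{0..}|lborel. uin x)"
      unfolding m_def mass_def by (rule set_lebesgue_integral_cong) (auto simp: init)
    have "AE x in lborel. 0 \<le> indicator {0..} x *\<^sub>R uin x"
      using nonneg by eventually_elim (auto simp: indicator_def)
    then have "m 0 \<ge> 0" unfolding m0eq set_lebesgue_integral_def by (rule integral_nonneg_AE)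
    moreover have "m 0 \<noteq> 0"
    proof
      assume "m 0 = 0"
      then have "AE x in lborel. x \<in> {0..} \<longrightarrow> uin x = 0"
        using ae_zero_of_int[OF uin_int nonneg] m0eq by simp
      then show False using notZ by simp
    qed
    ultimately show ?thesis by simp
  qed
  have "\<exists>x. 0 \<le> x \<and> x \<le> r1 \<and> m x = 0"
    by (rule IVT2'[OF _ _ _ mc]) (use neg m0 r1 in \<open>auto simp: m_def\<close>)
  define Zs where "Zs = {x \<in> {0..r1}. m x = 0}"
  have Zne: "Zs \<noteq> {}" using \<open>\<exists>x. 0 \<le> x \<and> x \<le> r1 \<and> m x = 0\<close> unfolding Zs_def by auto
  have Zcl: "closed Zs" unfolding Zs_def by (rule continuous_closed_preimage_constant[OF mc]) simp
  have Zbdd: "bdd_below Zs" unfolding Zs_def by (rule bdd_belowI[of _ 0]) auto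
  define r0 where "r0 = Inf Zs"
  have r0Z: "r0 \<in> Zs" unfolding r0_def by (rule closed_contains_Inf[OF Zne Zbdd Zcl])
  then have r0: "0 \<le> r0" "r0 \<le> r1" "m r0 = 0" unfolding Zs_def by auto
  have r0pos: "r0 > 0" using r0 m0 by (cases "r0 = 0") auto
  have mnn: "m r \<ge> 0" if r: "r \<in> {0..r0}" for r
  proof (rule ccontr)
    assume "\<not> m r \<ge> 0"
    then have "m r < 0" by simp
    have mcr: "continuous_on {0..r} m" by (rule continuous_on_subset[OF mc]) (use r r0 in auto)
    obtain y where y: "0 \<le> y" "y \<le> r" "m y = 0"
      using IVT2'[OF _ _ _ mcr, of 0] \<open>m r < 0\<close> m0 r by auto
    have "y \<noteq> r" using y \<open>m r < 0\<close> by auto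
    then have "y < r0" using y r by auto
    moreover have "y \<in> Zs" unfolding Zs_def using y r r0 by auto
    then have "r0 \<le> y" unfolding r0_def by (rule cInf_lower[OF _ Zbdd])
    ultimately show False by simp
  qed
  have r0t: "r0 \<le> t" using r0 r1 by auto
  have upos: "\<And>x. x \<ge> 0 \<Longrightarrow> u r0 x \<ge> 0"
    by (rule pos[OF r0pos _ nonneg]) (use mnn in \<open>auto simp: m_def\<close>)
  note M = moment[OF r0pos upos mom]
  have "AE x in lborel. x \<in> {0..} \<longrightarrow> u r0 x = 0"
    using ae_zero_of_int[OF L1[of r0]] upos r0 unfolding m_def mass_def by auto
  then have "AE x in lborel. indicator {0..} x *\<^sub>R (x * u r0 x) = 0"
    by eventually_elim (auto simp: indicator_def)
  then have "(LINT x:{0..}|lborel. x * u r0 x) = 0"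
    unfolding set_lebesgue_integral_def by (rule integral_eq_zero_AE)
  then have mom0: "(LINT x:{0..}|lborel. x * uin x) = 0" using M(2) by simp
  have "AE x in lborel. x \<in> {0..} \<longrightarrow> x * uin x = 0"
    by (rule ae_zero_of_int[OF mom _ mom0]) (use nonneg in \<open>eventually_elim, auto\<close>)
  then have "AE x in lborel. x \<in> {0..} \<longrightarrow> uin x = 0"
    using AE_lborel_singleton[of 0] by eventually_elim auto
  then show False using notZ by simp
qed

lemma main_result:
  assumes t: "t \<ge> 0"
    and nonneg: "AE x in lborel. x \<in> {0..} \<longrightarrow> uin x \<ge> 0"
    and mom: "set_integrable lborel {0..} (\<lambda>x. x * uin x)"
  shows "set_integrable lborel {0..} (\<lambda>x. x * u t x) \<and>
         (LINT x:{0..}|lborel. x * u t x) = (LINT x:{0..}|lborel. x * uin x)"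
proof (cases "t = 0")
  case True
  have "set_integrable lborel {0..} (\<lambda>x. x * u t x)"
    using mom True by (subst set_integrable_cong[OF refl refl]) (auto simp: init)
  moreover have "(LINT x:{0..}|lborel. x * u t x) = (LINT x:{0..}|lborel. x * uin x)"
    using True by (intro set_lebesgue_integral_cong) (auto simp: init)
  ultimately show ?thesis by simp
next
  case False
  then have t0: "t > 0" using t by simp
  show ?thesis
  proof (cases "AE x in lborel. x \<in> {0..} \<longrightarrow> uin x = 0")
    case True
    have Z: "AE x in lborel. x \<in> {0..} \<longrightarrow> u t x = 0" by (rule zero_case'[OF True t0])
    have ae1: "AE x in lborel. indicator {0..} x *\<^sub>R (x * u t x) = 0"
      using Z by eventually_elim (auto simp: indicator_def)
    have ae2: "AE x in lborel. indicator {0..} x *\<^sub>R (x * uin x) = 0"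
      using True by eventually_elim (auto simp: indicator_def)
    have meas: "(\<lambda>x. indicator {0..} x *\<^sub>R (x * u t x)) \<in> borel_measurable lborel"
    proof -
      have "(\<lambda>x. x * (indicator {0..} x *\<^sub>R u t x)) \<in> borel_measurable lborel"
        using meas_u[of t] t by (intro borel_measurable_times) auto
      then show ?thesis by (simp add: mult.left_commute)
    qed
    have "integrable lborel (\<lambda>x. indicator {0..} x *\<^sub>R (x * u t x))"
      by (subst integrable_cong_AE[OF meas _ ae1]) auto
    moreover have "(LINT x:{0..}|lborel. x * u t x) = 0" "(LINT x:{0..}|lborel. x * uin x) = 0"
      unfolding set_lebesgue_integral_def using integral_eq_zero_AE[OF ae1] integral_eq_zero_AE[OF ae2] by auto
    ultimately show ?thesis unfolding set_integrable_def by simp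
  next
    case False
    have mnn: "\<And>r. r \<in> {0..t} \<Longrightarrow> mass (u r) \<ge> 0" by (rule mass_nonneg_all[OF t0 nonneg mom False])
    have upos: "\<And>x. x \<ge> 0 \<Longrightarrow> u t x \<ge> 0" by (rule pos[OF t0 mnn nonneg])
    show ?thesis using moment[OF t0 upos mom] by simp
  qed
qed

end

theorem mainTheorem3:
  fixes uin :: "real \<Rightarrow> real" and u :: "real \<Rightarrow> real \<Rightarrow> real"
  assumes L1: "set_integrable lborel {0..} uin"
    and Linf: "\<exists>C. AE x in lborel. x \<in> {0..} \<longrightarrow> \<bar>uin x\<bar> \<le> C"
    and nonneg: "AE x in lborel. x \<in> {0..} \<longrightarrow> uin x \<ge> 0"
    and moment: "set_integrable lborel {0..} (\<lambda>x. x * uin x)"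
    and sol: "strong_solution uin u"
    and t: "t \<ge> 0"
  shows "set_integrable lborel {0..} (\<lambda>x. x * u t x) \<and>
         (LINT x:{0..}|lborel. x * u t x) = (LINT x:{0..}|lborel. x * uin x)"
proof -
  from sol obtain ut ux uxx where
    i0: "\<forall>x\<ge>0. u 0 x = uin x" and
    l1: "\<forall>t\<ge>0. set_integrable lborel {0..} (u t)" and
    l1c: "\<forall>t\<ge>0. ((\<lambda>s. LINT x:{0..}|lborel. \<bar>u s x - u t x\<bar>) \<longlongrightarrow> 0) (at t within {0..})" and
    bd: "\<forall>T\<ge>0. \<exists>C. \<forall>t\<in>{0..T}. \<forall>x\<ge>0. \<bar>u t x\<bar> \<le> C" and
    d: "\<forall>t>0. \<forall>x\<ge>0.
           ((\<lambda>s. u s x) has_real_derivative ut t x) (at t) \<and>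
           ((\<lambda>y. u t y) has_real_derivative ux t x) (at x within {0..}) \<and>
           ((\<lambda>y. ux t y) has_real_derivative uxx t x) (at x within {0..})" and
    c1: "continuous_on ({0<..} \<times> {0..}) (\<lambda>(t, x). u t x)" and
    c2: "continuous_on ({0<..} \<times> {0..}) (\<lambda>(t, x). ut t x)" and
    c3: "continuous_on ({0<..} \<times> {0..}) (\<lambda>(t, x). ux t x)" and
    c4: "continuous_on ({0<..} \<times> {0..}) (\<lambda>(t, x). uxx t x)" and
    bc: "\<forall>t>0. u t 0 = 0" and
    eq: "\<forall>t>0. \<forall>x>0. ut t x = mass (u t) * uxx t x"
    unfolding strong_solution_def by blast
  interpret sol2 u ut ux uxx uin
  proof unfold_locales
    show "\<And>t x. 0 < t \<Longrightarrow> 0 \<le> x \<Longrightarrow> ((\<lambda>s. u s x) has_real_derivative ut t x) (at t)" using d by blast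
    show "\<And>t x. 0 < t \<Longrightarrow> 0 \<le> x \<Longrightarrow> ((\<lambda>y. u t y) has_real_derivative ux t x) (at x within {0..})" using d by blast
    show "\<And>t x. 0 < t \<Longrightarrow> 0 \<le> x \<Longrightarrow> ((\<lambda>y. ux t y) has_real_derivative uxx t x) (at x within {0..})" using d by blast
  qed (use i0 l1 l1c bd c1 c2 c3 c4 bc eq in auto)
  show ?thesis by (rule main_result[OF t nonneg assms(4)])
qed

end
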